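(* For every integer $r\ge 1$, \[\frac{b}{4}\,\rho(r)\;\le\; \mathrm{Var}\big(\mu^{(r)}\big)\;\le\; 2b^2\,\rho(r).\]
   Context: Fix an integer $b\ge 2$. Every $n\in\mathbb{N}=\{0,1,2,\dots\}$ has a unique base-$b$ expansion $n=\sum_{k\ge0}n_kb^k$ with digits $n_k\in\{0,\dots,b-1\}$, finitely many nonzero; $s(n):=\sum_k n_k$ is the sum-of-digits function. For $r,n\in\mathbb{N}$ put $\Delta^{(r)}(n):=s(n+r)-s(n)$. For $d\in\mathbb{Z}$, $\mu^{(r)}(d):=\lim_{N\to\infty}\frac1N\big|\{n<N:\Delta^{(r)}(n)=d\}\big|$; these limits exist and $\mu^{(r)}$ is a probability measure on $\mathbb{Z}$ with finite moments of all orders. $\mathrm{Var}(\mu^{(r)})$ denotes its variance. Blocks: write the base-$b$ expansion of $r\ge1$ as the digit string $r_\ell\cdots r_0$ with $r_\ell\neq0$. A block of this string is either a maximal run of consecutive digits equal to $0$ (a block of $0$'s), or a maximal run of consecutive digits equal to $b-1$ (a block of $(b-1)$'s), or, when $b\ge3$, a single digit with value in $\{1,\dots,b-2\}$ (a single-digit block). The digit string is partitioned into its blocks; $\rho(r)$ denotes the number of blocks of $r$. *)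

theory Defs
  imports "HOL-Analysis.Analysis"
begin

definition digit :: "nat \<Rightarrow> nat \<Rightarrow> nat \<Rightarrow> nat" where
  "digit b n k = n div b ^ k mod b"

function sdig :: "nat \<Rightarrow> nat \<Rightarrow> nat" where
  "sdig b n = (if b < 2 \<or> n = 0 then 0 else n mod b + sdig b (n div b))"
  by auto
termination
  by (relation "Wellfounded.measure snd") (auto intro: div_less_dividend)

definition Delta :: "nat \<Rightarrow> nat \<Rightarrow> nat \<Rightarrow> int" where
  "Delta b r n = int (sdig b (n + r)) - int (sdig b n)"

definition mu :: "nat \<Rightarrow> nat \<Rightarrow> int \<Rightarrow> real" where
  "mu b r d = lim (\<lambda>N. real (card {n. n < N \<and> Delta b r n = d}) / real N)"

definition mean_mu :: "nat \<Rightarrow> nat \<Rightarrow> real" where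
  "mean_mu b r = (\<Sum>\<^sub>\<infinity>d\<in>(UNIV::int set). real_of_int d * mu b r d)"

definition var_mu :: "nat \<Rightarrow> nat \<Rightarrow> real" where
  "var_mu b r = (\<Sum>\<^sub>\<infinity>d\<in>(UNIV::int set). (real_of_int d - mean_mu b r)^2 * mu b r d)"

text \<open>Number of base-b digits of r (so digits r_0 .. r_l with l = ndigits - 1, r \<ge> 1).\<close>
definition ndigits :: "nat \<Rightarrow> nat \<Rightarrow> nat" where
  "ndigits b r = (LEAST k. r < b ^ k)"

text \<open>Number of blocks: count the positions k at which a new block starts
  (reading from position 0 upward): k = 0, or digit k is a single-digit block
  value in {1..b-2}, or digit k differs from digit k-1.  Runs of 0's and of
  (b-1)'s are merged into one block.\<close>
definition rho :: "nat \<Rightarrow> nat \<Rightarrow> nat" where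
  "rho b r = card {k. k < ndigits b r \<and>
      (k = 0 \<or> (digit b r k \<noteq> 0 \<and> digit b r k \<noteq> b - 1) \<or> digit b r k \<noteq> digit b r (k - 1))}"

end

theory Submission
  imports Defs
begin

declare sdig.simps[simp del]
lemma sdig_rec: "2 \<le> b \<Longrightarrow> sdig b n = n mod b + sdig b (n div b)"
  by (cases "n = 0") (simp_all add: sdig.simps[of b n] sdig.simps[of b 0])

lemma sdig_zero[simp]: "sdig b 0 = 0"
  by (simp add: sdig.simps)

lemma sum_split_blocks:
  fixes n k :: nat and g :: "nat \<Rightarrow> 'a::comm_monoid_add"
  shows "(\<Sum>i<n*k. g i) = (\<Sum>q<n. \<Sum>m<k. g (q*k + m))"
proof (induct n)
  case 0 then show ?case by simp
next
  case (Suc n)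
  have "(\<Sum>i<Suc n*k. g i) = (\<Sum>i<n*k. g i) + (\<Sum>i\<in>{n*k..<n*k+k}. g i)"
    using sum.atLeastLessThan_concat[of 0 "n*k" "n*k+k" g]
    by (simp add: atLeast0LessThan add.commute)
  also have "(\<Sum>i\<in>{n*k..<n*k+k}. g i) = (\<Sum>m<k. g (n*k + m))"
    using sum.shift_bounds_nat_ivl[of g 0 "n*k" k] by (simp add: atLeast0LessThan add.commute)
  finally show ?case using Suc by simp
qed

lemma legendre:
  assumes "2 \<le> b" "n < b ^ M"
  shows "sdig b n + (b - 1) * (\<Sum>j<M. n div b ^ Suc j) = n"
  using assms(2)
proof (induct M arbitrary: n)
  case 0 then show ?case by simp
next
  case (Suc M)
  have b0: "b > 0" using assms by simp
  have "n div b < b ^ M" using Suc.prems b0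
    by (simp add: div_less_iff_less_mult mult.commute)
  then have IH: "sdig b (n div b) + (b - 1) * (\<Sum>j<M. n div b div b ^ Suc j) = n div b"
    using Suc.hyps by blast
  have e: "(\<Sum>j<Suc M. n div b ^ Suc j) = n div b + (\<Sum>j<M. n div b div b ^ Suc j)"
  proof -
    have e1: "(\<Sum>j<Suc M. n div b ^ Suc j) = (\<Sum>j<Suc M. n div b div b ^ j)"
      by (simp add: div_mult2_eq)
    have e2: "(\<Sum>j<Suc M. n div b div b ^ j) = n div b + (\<Sum>j<M. n div b div b ^ Suc j)"
      by (simp only: sum.lessThan_Suc_shift) simp
    show ?thesis using e1 e2 by simp
  qed
  have "sdig b n + (b - 1) * (\<Sum>j<Suc M. n div b ^ Suc j)
      = n mod b + sdig b (n div b) + (b - 1) * (n div b + (\<Sum>j<M. n div b div b ^ Suc j))"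
    by (subst sdig_rec[OF assms(1)]) (simp only: e)
  also have "\<dots> = n mod b + (sdig b (n div b) + (b - 1) * (\<Sum>j<M. n div b div b ^ Suc j)) + (b - 1) * (n div b)"
    by (simp only: distrib_left add.assoc add.commute add.left_commute)
  also have "\<dots> = n mod b + b * (n div b)" using IH b0
    by (simp add: diff_mult_distrib)
  finally show ?case by simp
qed

lemma sdig_block:
  assumes "2 \<le> b" "m < b ^ K"
  shows "sdig b (q * b ^ K + m) = sdig b q + sdig b m"
  using assms(2)
proof (induct K arbitrary: m)
  case 0 then show ?case by simp
next
  case (Suc K)
  have b0: "b > 0" using assms by simp
  have m': "m div b < b ^ K" using Suc.prems b0
    by (simp add: div_less_iff_less_mult mult.commute)
  have "q * b ^ Suc K + m = (q * b ^ K + m div b) * b + m mod b" by (simp add: algebra_simps)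
  then have "sdig b (q * b ^ Suc K + m) = m mod b + sdig b (q * b ^ K + m div b)"
    using sdig_rec[OF assms(1), of "q * b ^ Suc K + m"] b0 by simp
  also have "\<dots> = sdig b q + sdig b m" using Suc.hyps[OF m'] sdig_rec[OF assms(1), of m] by simp
  finally show ?case .
qed

lemma card_filter_sum:
  "finite A \<Longrightarrow> card {x\<in>A. P x} = (\<Sum>x\<in>A. if P x then 1 else 0)"
  by (simp add: sum.inter_filter[symmetric])

definition cr :: "nat \<Rightarrow> nat \<Rightarrow> nat \<Rightarrow> nat \<Rightarrow> nat" where
  "cr b r j m = (m mod b ^ j + r mod b ^ j) div b ^ j"

definition CC :: "nat \<Rightarrow> nat \<Rightarrow> nat \<Rightarrow> nat \<Rightarrow> nat" where
  "CC b r K m = (\<Sum>j<K. cr b r (Suc j) m)"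

context
  fixes b r :: nat
  assumes b2: "2 \<le> b"
begin

lemma bpos: "0 < b ^ j" using b2 by simp

lemma cr_if: "cr b r j m = (if b ^ j \<le> m mod b ^ j + r mod b ^ j then 1 else 0)"
proof -
  have B: "0 < b ^ j" by (rule bpos)
  have "m mod b ^ j < b ^ j" "r mod b ^ j < b ^ j" using B by auto
  then have lt: "m mod b ^ j + r mod b ^ j < 2 * b ^ j" by linarith
  show ?thesis
  proof (cases "b ^ j \<le> m mod b ^ j + r mod b ^ j")
    case True
    have "(m mod b ^ j + r mod b ^ j) div b ^ j = 1"
      by (rule div_nat_eqI) (use True lt in auto)
    then show ?thesis using True unfolding cr_def by simp
  next
    case False
    then show ?thesis unfolding cr_def by simp
  qed
qed

lemma cr_le1: "cr b r j m \<le> 1" by (simp add: cr_if)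

lemma CC_le: "CC b r K m \<le> K"
proof -
  have "CC b r K m \<le> (\<Sum>j<K. 1)" unfolding CC_def by (rule sum_mono) (rule cr_le1)
  then show ?thesis by simp
qed

lemma CC_Suc: "CC b r (Suc K) m = CC b r K m + cr b r (Suc K) m"
  by (simp add: CC_def)

lemma Delta_CC:
  assumes "r < b ^ K" "m < b ^ K"
  shows "Delta b r m = int (sdig b r) - int (b - 1) * int (CC b r K m)"
proof -
  have BK: "b ^ K + b ^ K \<le> b ^ Suc K"
  proof -
    have "2 * b ^ K \<le> b * b ^ K" using b2 by (rule mult_right_mono) simp
    then show ?thesis by (simp add: mult_2)
  qed
  have mr: "m + r < b ^ Suc K" using assms BK by linarith
  have mS: "m < b ^ Suc K" "r < b ^ Suc K" using assms BK by linarith+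
  have split: "(m + r) div b ^ Suc j = m div b ^ Suc j + r div b ^ Suc j + cr b r (Suc j) m" for j
    unfolding cr_def by (rule div_add1_eq)
  have sum: "(\<Sum>j<Suc K. (m + r) div b ^ Suc j) = (\<Sum>j<Suc K. m div b ^ Suc j) + (\<Sum>j<Suc K. r div b ^ Suc j) + CC b r (Suc K) m"
    unfolding split CC_def by (simp add: sum.distrib)
  have c0: "cr b r (Suc K) m = 0" using mr mS by (simp add: cr_if)
  have l1: "sdig b (m + r) + (b - 1) * (\<Sum>j<Suc K. (m + r) div b ^ Suc j) = m + r" by (rule legendre[OF b2 mr])
  have l2: "sdig b m + (b - 1) * (\<Sum>j<Suc K. m div b ^ Suc j) = m" by (rule legendre[OF b2 mS(1)])
  have l3: "sdig b r + (b - 1) * (\<Sum>j<Suc K. r div b ^ Suc j) = r" by (rule legendre[OF b2 mS(2)])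
  have "sdig b (m + r) + (b - 1) * CC b r K m = sdig b m + sdig b r"
    using l1 l2 l3 unfolding sum CC_Suc c0 by (simp add: distrib_left)
  then have "int (sdig b (m + r)) + int (b - 1) * int (CC b r K m) = int (sdig b m) + int (sdig b r)"
    by (metis of_nat_add of_nat_mult)
  then show ?thesis unfolding Delta_def by (simp add: add.commute algebra_simps)
qed

lemma Delta_period:
  assumes "m + r < b ^ K"
  shows "Delta b r (q * b ^ K + m) = Delta b r m"
proof -
  have m: "m < b ^ K" using assms by simp
  have "sdig b (q * b ^ K + m + r) = sdig b q + sdig b (m + r)"
    using sdig_block[OF b2 assms, of q] by (simp add: add.assoc)
  moreover have "sdig b (q * b ^ K + m) = sdig b q + sdig b m" by (rule sdig_block[OF b2 m])
  ultimately show ?thesis unfolding Delta_def by simp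
qed

lemma cr_mono:
  assumes "r < b ^ j"
  shows "cr b r (Suc j) m \<le> cr b r j m"
proof -
  have "b ^ j \<le> b ^ Suc j" using b2 by (intro power_increasing) auto
  then have rS: "r < b ^ Suc j" using assms by linarith
  show ?thesis
  proof (cases "b ^ Suc j \<le> m mod b ^ Suc j + r")
    case True
    have e: "m mod b ^ Suc j = b ^ j * (m div b ^ j mod b) + m mod b ^ j"
      by (simp only: power_Suc2 mod_mult2_eq)
    have d: "m div b ^ j mod b \<le> b - 1" using b2 by (simp add: less_Suc_eq_le[symmetric])
    have "b ^ j * (m div b ^ j mod b + 1) \<le> b ^ j * b" using d b2 by (intro mult_left_mono) auto
    then have "b ^ j * (m div b ^ j mod b) + b ^ j \<le> b ^ Suc j" by (simp add: algebra_simps)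
    then have "b ^ j \<le> m mod b ^ j + r" using True e by linarith
    then show ?thesis using assms rS by (simp add: cr_if)
  next
    case False
    then show ?thesis using rS by (simp add: cr_if)
  qed
qed

end

definition pk :: "nat \<Rightarrow> nat \<Rightarrow> nat \<Rightarrow> nat \<Rightarrow> nat" where
  "pk b r n k = card {m. m < b ^ n \<and> CC b r n m = k}"

context
  fixes b r :: nat
  assumes b2: "2 \<le> b" and r1: "1 \<le> r"
begin

abbreviation "L \<equiv> ndigits b r"

lemma L_ex: "r < b ^ L"
proof -
  have "r < 2 ^ r" by (rule less_exp)
  also have "2 ^ r \<le> b ^ r" using b2 by (rule power_mono) simp
  finally have "\<exists>k. r < b ^ k" by blast
  then show ?thesis unfolding ndigits_def by (rule LeastI_ex)
qed

lemma L_pos: "1 \<le> L"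
proof (rule ccontr)
  assume "\<not> 1 \<le> L"
  then have "L = 0" by simp
  then show False using L_ex r1 by simp
qed

lemma L_low: "b ^ (L - 1) \<le> r"
proof -
  have "\<not> r < b ^ (L - 1)" unfolding ndigits_def
    by (rule not_less_Least) (use L_pos in \<open>simp add: ndigits_def\<close>)
  then show ?thesis by simp
qed

lemma r_lt: "L \<le> j \<Longrightarrow> r < b ^ j"
proof -
  assume "L \<le> j"
  then have "b ^ L \<le> b ^ j" using b2 by (intro power_increasing) auto
  then show ?thesis using L_ex by linarith
qed

lemma digit_high: "L \<le> j \<Longrightarrow> digit b r j = 0"
  using r_lt by (simp add: digit_def)

lemma digit_top: "digit b r (L - 1) \<noteq> 0"
proof -
  have "0 < r div b ^ (L - 1)" using L_low bpos[OF b2, of "L - 1"] by (simp add: div_greater_zero_iff)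
  then have "r div b ^ (L - 1) \<ge> 1" by simp
  moreover have "r div b ^ (L - 1) < b"
  proof -
    have "L = Suc (L - 1)" using L_pos by simp
    then have "b ^ L = b ^ (L - 1) * b" by (metis power_Suc2)
    then have "r < b * b ^ (L - 1)" using L_ex by (simp add: mult.commute)
    then show ?thesis using div_less_iff_less_mult[OF bpos[OF b2, of "L - 1"]] by blast
  qed
  ultimately show ?thesis by (simp add: digit_def)
qed

lemma cr_zero_from:
  assumes "L \<le> k" "cr b r k m = 0" "k \<le> j"
  shows "cr b r j m = 0"
  using assms(3)
proof (induct j rule: dec_induct)
  case base then show ?case using assms(2) .
next
  case (step j)
  have "r < b ^ j" using r_lt assms(1) step(1) by simp
  then show ?case using cr_mono[OF b2, of r j m] step by simp
qed

lemma CC_tail: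
  assumes "L \<le> k" "CC b r n m = k"
  shows "cr b r k m = 1"
proof (rule ccontr)
  assume "cr b r k m \<noteq> 1"
  then have c0: "cr b r k m = 0" using cr_le1[OF b2, of r k m] by simp
  have k1: "1 \<le> k" using L_pos assms(1) by simp
  have "CC b r n' m \<le> k - 1" for n'
  proof (induct n')
    case 0 then show ?case by (simp add: CC_def)
  next
    case (Suc n')
    show ?case
    proof (cases "k \<le> Suc n'")
      case True
      then have "cr b r (Suc n') m = 0" using cr_zero_from[OF assms(1) c0] by simp
      then show ?thesis using Suc by (simp add: CC_Suc[OF b2])
    next
      case False
      then show ?thesis using CC_le[OF b2, of r n' m] cr_le1[OF b2, of r "Suc n'" m]
        by (simp add: CC_Suc[OF b2])
    qed
  qed
  then have "k \<le> k - 1" using assms(2) by metis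
  then show False using k1 by simp
qed

lemma count_cr:
  assumes "L \<le> k" "k \<le> n"
  shows "card {m. m < b ^ n \<and> cr b r k m = 1} = b ^ (n - k) * r"
proof -
  have rk: "r < b ^ k" using r_lt assms(1) .
  have rmod: "r mod b ^ k = r" using rk by simp
  have bn: "b ^ n = b ^ (n - k) * b ^ k" using assms(2) by (simp add: power_add[symmetric])
  have inner: "(\<Sum>m'<b ^ k. if b ^ k \<le> m' + r then 1 else 0) = (r::nat)"
  proof -
    have "{m'\<in>{..<b ^ k}. b ^ k \<le> m' + r} = {b ^ k - r..<b ^ k}" using rk by auto
    then have "card {m'\<in>{..<b ^ k}. b ^ k \<le> m' + r} = r" using rk by simp
    then show ?thesis using card_filter_sum[of "{..<b ^ k}" "\<lambda>m'. b ^ k \<le> m' + r"] by simp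
  qed
  have "card {m. m < b ^ n \<and> cr b r k m = 1} = card {m\<in>{..<b ^ n}. b ^ k \<le> m mod b ^ k + r}"
    by (rule arg_cong[where f=card]) (auto simp: cr_if[OF b2] rmod)
  also have "\<dots> = (\<Sum>m<b ^ n. if b ^ k \<le> m mod b ^ k + r then 1 else 0)"
    by (rule card_filter_sum) simp
  also have "\<dots> = (\<Sum>m<b ^ (n - k) * b ^ k. if b ^ k \<le> m mod b ^ k + r then 1 else 0)"
    by (simp only: bn)
  also have "\<dots> = (\<Sum>q<b ^ (n - k). \<Sum>m'<b ^ k. if b ^ k \<le> (q * b ^ k + m') mod b ^ k + r then 1 else 0)"
    by (rule sum_split_blocks)
  also have "\<dots> = (\<Sum>q<b ^ (n - k). \<Sum>m'<b ^ k. if b ^ k \<le> m' + r then 1 else 0)"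
    by (intro sum.cong refl) simp
  also have "\<dots> = b ^ (n - k) * r" using inner by simp
  finally show ?thesis .
qed

lemma pk_le_tail:
  assumes "L \<le> k" "k \<le> n"
  shows "pk b r n k \<le> b ^ (n - k) * r"
proof -
  have "pk b r n k \<le> card {m. m < b ^ n \<and> cr b r k m = 1}"
    unfolding pk_def
  proof (rule card_mono)
    show "{m. m < b ^ n \<and> CC b r n m = k} \<subseteq> {m. m < b ^ n \<and> cr b r k m = 1}"
      using CC_tail[OF assms(1)] by blast
  qed simp
  then show ?thesis using count_cr[OF assms] by simp
qed

lemma pk_zero: "n < k \<Longrightarrow> pk b r n k = 0"
proof -
  assume nk: "n < k"
  have "CC b r n m \<noteq> k" for m using CC_le[OF b2, of r n m] nk by simp
  then have "{m. m < b ^ n \<and> CC b r n m = k} = {}" by blast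
  then show ?thesis unfolding pk_def by simp
qed

lemma pk_le: "pk b r n k \<le> b ^ n"
proof -
  have "pk b r n k \<le> card {..<b ^ n}" unfolding pk_def by (rule card_mono) auto
  then show ?thesis by simp
qed

lemma pk_bound: "real (pk b r n k) \<le> real r * real b ^ L * real b ^ n / 2 ^ k"
proof -
  have b2r: "(2::real) \<le> real b" using b2 by simp
  have p2: "(2::real) ^ k \<le> real b ^ k" using b2r by (intro power_mono) auto
  consider "k < L" | "L \<le> k" "k \<le> n" | "n < k" by linarith
  then show ?thesis
  proof cases
    case 1
    have "real b ^ k \<le> real b ^ L" using 1 b2r by (intro power_increasing) auto
    then have "(2::real) ^ k \<le> real b ^ L" using p2 by linarith
    moreover have "1 \<le> real r" using r1 by simp
    ultimately have "2 ^ k * 1 \<le> real b ^ L * real r" by (intro mult_mono) auto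
    then have "1 \<le> real r * real b ^ L / 2 ^ k" by (simp add: field_simps)
    then have X: "real b ^ n * 1 \<le> real b ^ n * (real r * real b ^ L / 2 ^ k)" by (intro mult_left_mono) auto
    have Y: "real b ^ n * (real r * real b ^ L / 2 ^ k) = real r * real b ^ L * real b ^ n / 2 ^ k"
      by (simp add: field_simps)
    have "real (pk b r n k) \<le> real b ^ n" using pk_le[of n k] by (metis of_nat_le_iff of_nat_power)
    then show ?thesis using X Y by linarith
  next
    case 2
    have "real (pk b r n k) \<le> real b ^ (n - k) * real r" using pk_le_tail[OF 2] by (metis of_nat_le_iff of_nat_mult of_nat_power)
    also have "real b ^ (n - k) = real b ^ n / real b ^ k" using 2 b2r by (simp add: power_diff)
    also have "real b ^ n / real b ^ k * real r \<le> real r * real b ^ L * real b ^ n / 2 ^ k"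
    proof -
      have "real b ^ n * real r * 2 ^ k \<le> real b ^ n * real r * real b ^ k" using p2 by (intro mult_left_mono) auto
      also have "\<dots> \<le> real r * real b ^ L * real b ^ n * real b ^ k"
        using b2r by (simp add: mult_ac) (intro mult_left_mono; auto simp: one_le_power)
      finally show ?thesis using b2r by (simp add: field_simps)
    qed
    finally show ?thesis .
  next
    case 3 then show ?thesis using pk_zero by simp
  qed
qed

end

definition cntd :: "nat \<Rightarrow> nat \<Rightarrow> int \<Rightarrow> nat \<Rightarrow> real" where
  "cntd b r d N = real (card {n. n < N \<and> Delta b r n = d})"

definition PKr :: "nat \<Rightarrow> nat \<Rightarrow> nat \<Rightarrow> int \<Rightarrow> real" where
  "PKr b r K d = real (card {m. m < b ^ K \<and> Delta b r m = d}) / real b ^ K"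

lemma card_lt_sum_real:
  fixes N :: nat
  shows "real (card {n. n < N \<and> P n}) = (\<Sum>n<N. if P n then 1 else (0::real))"
proof -
  have "card {n. n < N \<and> P n} = card {n\<in>{..<N}. P n}" by (rule arg_cong[where f=card]) auto
  also have "\<dots> = (\<Sum>n<N. if P n then 1 else 0)" by (rule card_filter_sum) simp
  finally have "real (card {n. n < N \<and> P n}) = real (\<Sum>n<N. if P n then 1 else 0::nat)" by simp
  also have "\<dots> = (\<Sum>n<N. real (if P n then 1 else 0::nat))" by (rule of_nat_sum)
  also have "\<dots> = (\<Sum>n<N. if P n then 1 else (0::real))" by (intro sum.cong refl) simp
  finally show ?thesis .
qed

context
  fixes b r :: nat
  assumes b2: "2 \<le> b" and r1: "1 \<le> r"
begin

lemma est:
  fixes K N :: nat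
  assumes rK: "r \<le> b ^ K" and N1: "1 \<le> N"
  shows "\<bar>cntd b r d N / real N - PKr b r K d\<bar> \<le> real r / real b ^ K + 2 * real b ^ K / real N"
proof -
  define B where "B = b ^ K"
  have B0: "0 < B" unfolding B_def using bpos[OF b2] .
  define f where "f n = (if Delta b r n = d then 1 else (0::real))" for n
  define Q where "Q = N div B"
  define R where "R = N mod B"
  have NQR: "N = Q * B + R" unfolding Q_def R_def by simp
  have RB: "R < B" unfolding R_def using B0 by simp
  define G where "G = (\<Sum>m<B. f m)"
  have c: "cntd b r d N = (\<Sum>n<N. f n)" unfolding cntd_def f_def by (rule card_lt_sum_real)
  have PK: "PKr b r K d = G / real B" unfolding PKr_def G_def f_def B_def
    using card_lt_sum_real[of "b ^ K" "\<lambda>m. Delta b r m = d"] by simp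
  have f01: "0 \<le> f n" "f n \<le> 1" for n unfolding f_def by auto
  have G0: "0 \<le> G" unfolding G_def using f01 by (simp add: sum_nonneg)
  have GB: "G \<le> real B" unfolding G_def
  proof -
    have "(\<Sum>m<B. f m) \<le> (\<Sum>m<B. 1)" using f01 by (intro sum_mono) auto
    then show "(\<Sum>m<B. f m) \<le> real B" by simp
  qed
  have split1: "(\<Sum>n<N. f n) = (\<Sum>n<Q*B. f n) + (\<Sum>n\<in>{Q*B..<N}. f n)"
    using sum.atLeastLessThan_concat[of 0 "Q*B" N f] NQR by (simp add: atLeast0LessThan)
  have tail0: "0 \<le> (\<Sum>n\<in>{Q*B..<N}. f n)" using f01 by (simp add: sum_nonneg)
  have tailB: "(\<Sum>n\<in>{Q*B..<N}. f n) \<le> real B"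
  proof -
    have "(\<Sum>n\<in>{Q*B..<N}. f n) \<le> (\<Sum>n\<in>{Q*B..<N}. 1)" using f01 by (intro sum_mono) auto
    also have "\<dots> = real R" using NQR by simp
    finally show ?thesis using RB by simp
  qed
  have blocks: "(\<Sum>n<Q*B. f n) = (\<Sum>q<Q. \<Sum>m<B. f (q*B + m))" by (rule sum_split_blocks)
  have per: "\<bar>(\<Sum>m<B. f (q*B + m)) - G\<bar> \<le> real r" for q
  proof -
    have rB: "r \<le> B" using rK unfolding B_def .
    have sp: "(\<Sum>m<B. g m) = (\<Sum>m<B - r. g m) + (\<Sum>m\<in>{B - r..<B}. g m)" for g :: "nat \<Rightarrow> real"
      using sum.atLeastLessThan_concat[of 0 "B - r" B g] rB by (simp add: atLeast0LessThan)
    have eq: "(\<Sum>m<B - r. f (q*B + m)) = (\<Sum>m<B - r. f m)"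
    proof (rule sum.cong[OF refl])
      fix m assume "m \<in> {..<B - r}"
      then have "m + r < b ^ K" using rB unfolding B_def by auto
      then show "f (q*B + m) = f m" unfolding f_def B_def using Delta_period[OF b2] by simp
    qed
    have a1: "0 \<le> (\<Sum>m\<in>{B - r..<B}. f (q*B + m))" "0 \<le> (\<Sum>m\<in>{B - r..<B}. f m)"
      using f01 by (simp_all add: sum_nonneg)
    have a2: "(\<Sum>m\<in>{B - r..<B}. f (q*B + m)) \<le> real r" "(\<Sum>m\<in>{B - r..<B}. f m) \<le> real r"
    proof -
      have "(\<Sum>m\<in>{B - r..<B}. f (q*B + m)) \<le> (\<Sum>m\<in>{B - r..<B}. 1)" using f01 by (intro sum_mono) auto
      then show "(\<Sum>m\<in>{B - r..<B}. f (q*B + m)) \<le> real r" using rB by simp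
      have "(\<Sum>m\<in>{B - r..<B}. f m) \<le> (\<Sum>m\<in>{B - r..<B}. 1)" using f01 by (intro sum_mono) auto
      then show "(\<Sum>m\<in>{B - r..<B}. f m) \<le> real r" using rB by simp
    qed
    show ?thesis unfolding G_def sp[of "\<lambda>m. f (q*B + m)"] sp[of f] eq using a1 a2 by linarith
  qed
  have h1: "\<bar>(\<Sum>n<Q*B. f n) - real Q * G\<bar> \<le> real Q * real r"
  proof -
    have "(\<Sum>n<Q*B. f n) - real Q * G = (\<Sum>q<Q. (\<Sum>m<B. f (q*B + m)) - G)"
      unfolding blocks by (simp add: sum_subtractf)
    also have "\<bar>\<dots>\<bar> \<le> (\<Sum>q<Q. \<bar>(\<Sum>m<B. f (q*B + m)) - G\<bar>)" by (rule sum_abs)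
    also have "\<dots> \<le> (\<Sum>q<Q. real r)" using per by (intro sum_mono) auto
    finally show ?thesis by simp
  qed
  define c where "c = cntd b r d N"
  have hc: "\<bar>c - real Q * G\<bar> \<le> real Q * real r + real B"
    unfolding c_def c split1 using h1 tail0 tailB by linarith
  have N0: "0 < real N" using N1 by simp
  have QBN: "real Q * real B \<le> real N" "real N \<le> real Q * real B + real B"
    using NQR RB by (simp_all add: of_nat_mult[symmetric] del: of_nat_mult)
  have key: "\<bar>c * real B - G * real N\<bar> \<le> real r * real N + 2 * real B * real B"
  proof -
    have e: "c * real B - G * real N = (c - real Q * G) * real B + G * (real Q * real B - real N)"
      by (simp add: algebra_simps)
    have t1: "\<bar>(c - real Q * G) * real B\<bar> \<le> (real Q * real r + real B) * real B"
      using hc B0 by (simp add: abs_mult mult_right_mono)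
    have t1': "(real Q * real r + real B) * real B \<le> real r * real N + real B * real B"
    proof -
      have "real Q * real B * real r \<le> real N * real r" using QBN(1) by (intro mult_right_mono) auto
      then show ?thesis by (simp add: algebra_simps)
    qed
    have t2: "\<bar>G * (real Q * real B - real N)\<bar> \<le> real B * real B"
    proof -
      have "\<bar>real Q * real B - real N\<bar> \<le> real B" using QBN by linarith
      then have "\<bar>G\<bar> * \<bar>real Q * real B - real N\<bar> \<le> real B * real B"
        using G0 GB by (intro mult_mono) auto
      then show ?thesis by (simp add: abs_mult)
    qed
    show ?thesis unfolding e using t1 t1' t2 abs_triangle_ineq[of "(c - real Q * G) * real B" "G * (real Q * real B - real N)"]
      by linarith
  qed
  have "c / real N - G / real B = (c * real B - G * real N) / (real N * real B)"
    using N0 B0 by (simp add: field_simps)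
  then have "\<bar>c / real N - G / real B\<bar> = \<bar>c * real B - G * real N\<bar> / (real N * real B)"
    using N0 B0 by (simp add: abs_divide abs_mult)
  also have "\<dots> \<le> (real r * real N + 2 * real B * real B) / (real N * real B)"
    using key N0 B0 by (intro divide_right_mono) auto
  also have "\<dots> = real r / real B + 2 * real B / real N" using N0 B0 by (simp add: field_simps)
  finally show ?thesis unfolding c_def PK B_def by simp
qed

lemma bK_big: "real n \<le> real b ^ n"
proof -
  have "n < 2 ^ n" by (rule less_exp)
  also have "(2::nat) ^ n \<le> b ^ n" using b2 by (rule power_mono) simp
  finally show ?thesis by (metis less_imp_le of_nat_le_iff of_nat_power)
qed

lemma exists_K:
  assumes "0 < e"
  shows "\<exists>k::nat. L b r \<le> k \<and> real r / real b ^ k < e"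
proof -
  obtain n where n: "real r / e < real n" using reals_Archimedean2 by blast
  define K where "K = max n (L b r)"
  have "real n \<le> real b ^ n" by (rule bK_big)
  also have "\<dots> \<le> real b ^ K" using b2 unfolding K_def by (intro power_increasing) auto
  finally have "real r / e < real b ^ K" using n by linarith
  then have "real r < e * real b ^ K" using assms by (simp add: field_simps)
  then have "real r / real b ^ K < e" using b2 by (simp add: field_simps)
  then show ?thesis unfolding K_def by (intro exI[of _ "max n (L b r)"]) auto
qed

lemma mu_conv:
  "(\<lambda>N. cntd b r d N / real N) \<longlonglongrightarrow> mu b r d"
proof -
  have "Cauchy (\<lambda>N. cntd b r d N / real N)"
  proof (rule CauchyI)
    fix e :: real assume e: "0 < e"
    obtain K where K: "L b r \<le> K" "real r / real b ^ K < e / 4" using exists_K[of "e/4"] e by auto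
    have rK: "r \<le> b ^ K" using r_lt[OF b2 r1 K(1)] by simp
    obtain M0 where M0: "8 * real b ^ K / e < real M0" using reals_Archimedean2 by blast
    define M where "M = max M0 1"
    have "\<forall>m\<ge>M. \<forall>n\<ge>M. norm (cntd b r d m / real m - cntd b r d n / real n) < e"
    proof (intro allI impI)
      fix m n assume mn: "M \<le> m" "M \<le> n"
      have bnd: "2 * real b ^ K / real x < e / 4" if "M \<le> x" for x
      proof -
        have x1: "1 \<le> x" "real M0 \<le> real x" using that unfolding M_def by auto
        have "e * real M0 \<le> e * real x" using x1 e by (intro mult_left_mono) auto
        moreover have "8 * real b ^ K < e * real M0" using M0 e by (simp add: field_simps)
        ultimately have "8 * real b ^ K < e * real x" by linarith
        then show ?thesis using x1 by (simp add: field_simps)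
      qed
      have m1: "1 \<le> m" "1 \<le> n" using mn unfolding M_def by auto
      have "\<bar>cntd b r d m / real m - PKr b r K d\<bar> < e / 2"
        using est[OF rK m1(1), of d] bnd[OF mn(1)] K(2) by linarith
      moreover have "\<bar>cntd b r d n / real n - PKr b r K d\<bar> < e / 2"
        using est[OF rK m1(2), of d] bnd[OF mn(2)] K(2) by linarith
      ultimately show "norm (cntd b r d m / real m - cntd b r d n / real n) < e"
        unfolding real_norm_def by linarith
    qed
    then show "\<exists>M. \<forall>m\<ge>M. \<forall>n\<ge>M. norm (cntd b r d m / real m - cntd b r d n / real n) < e" by blast
  qed
  then have "convergent (\<lambda>N. cntd b r d N / real N)" by (simp add: Cauchy_convergent_iff)
  then show ?thesis unfolding mu_def cntd_def convergent_LIMSEQ_iff[symmetric] by simp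
qed

lemma mu_approx:
  fixes K :: nat
  assumes "L b r \<le> K"
  shows "\<bar>mu b r d - PKr b r K d\<bar> \<le> real r / real b ^ K"
proof -
  have rK: "r \<le> b ^ K" using r_lt[OF b2 r1 assms] by simp
  have l1: "(\<lambda>N. \<bar>cntd b r d N / real N - PKr b r K d\<bar>) \<longlonglongrightarrow> \<bar>mu b r d - PKr b r K d\<bar>"
    by (intro tendsto_intros mu_conv)
  have l2: "(\<lambda>N. real r / real b ^ K + 2 * real b ^ K / real N) \<longlonglongrightarrow> real r / real b ^ K + 0"
    by (intro tendsto_intros)
  show ?thesis
  proof (rule LIMSEQ_le[OF l1 l2[simplified]])
    show "\<exists>N. \<forall>n\<ge>N. \<bar>cntd b r d n / real n - PKr b r K d\<bar> \<le> real r / real b ^ K + 2 * real b ^ K / real n"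
      using est[OF rK] by (intro exI[of _ 1]) auto
  qed
qed

end

definition phi :: "nat \<Rightarrow> nat \<Rightarrow> nat \<Rightarrow> int" where
  "phi b r k = int (sdig b r) - int (b - 1) * int k"

lemma summable_sq_geom: "summable (\<lambda>k::nat. (real k + 1) ^ 2 / 2 ^ k)"
proof (rule summable_ratio_test[where c = "3/4" and N = 4])
  fix k :: nat assume k: "4 \<le> k"
  define x where "x = real k"
  have x4: "4 \<le> x" using k unfolding x_def by simp
  have "0 \<le> (x - 4) * (x + 2)" using x4 by (intro mult_nonneg_nonneg) auto
  then have q: "2 * (x + 2) ^ 2 \<le> 3 * (x + 1) ^ 2" by (simp add: power2_eq_square algebra_simps)
  have "(x + 2) ^ 2 / 2 ^ Suc k = (2 * (x + 2) ^ 2) / (4 * 2 ^ k)" by simp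
  also have "\<dots> \<le> (3 * (x + 1) ^ 2) / (4 * 2 ^ k)" using q by (intro divide_right_mono) auto
  also have "\<dots> = 3/4 * ((x + 1) ^ 2 / 2 ^ k)" by simp
  finally have fin: "(x + 2) ^ 2 / 2 ^ Suc k \<le> 3/4 * ((x + 1) ^ 2 / 2 ^ k)" .
  have e: "real (Suc k) + 1 = x + 2" by (simp add: x_def)
  have n1: "norm ((real (Suc k) + 1) ^ 2 / 2 ^ Suc k) = (x + 2) ^ 2 / 2 ^ Suc k"
    unfolding e real_norm_def by (rule abs_of_nonneg) simp
  have n2: "norm ((real k + 1) ^ 2 / 2 ^ k) = (x + 1) ^ 2 / 2 ^ k"
    unfolding x_def real_norm_def by (rule abs_of_nonneg) simp
  show "norm ((real (Suc k) + 1) ^ 2 / 2 ^ Suc k) \<le> 3/4 * norm ((real k + 1) ^ 2 / 2 ^ k)"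
    unfolding n1 n2 by (rule fin)
qed simp

context
  fixes b r :: nat
  assumes b2: "2 \<le> b" and r1: "1 \<le> r"
begin

lemma phi_inj: "inj (phi b r)"
  using b2 unfolding phi_def inj_def by auto

lemma Delta_phi: "L b r \<le> n \<Longrightarrow> m < b ^ n \<Longrightarrow> Delta b r m = phi b r (CC b r n m)"
  using Delta_CC[OF b2 r_lt[OF b2 r1]] unfolding phi_def by simp

lemma PKr_phi: "L b r \<le> n \<Longrightarrow> PKr b r n (phi b r k) = real (pk b r n k) / real b ^ n"
proof -
  assume n: "L b r \<le> n"
  have "{m. m < b ^ n \<and> Delta b r m = phi b r k} = {m. m < b ^ n \<and> CC b r n m = k}"
    using Delta_phi[OF n] phi_inj by (auto simp: inj_eq)
  then show ?thesis unfolding PKr_def pk_def by simp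
qed

lemma PKr_off: "L b r \<le> n \<Longrightarrow> d \<notin> range (phi b r) \<Longrightarrow> PKr b r n d = 0"
proof -
  assume n: "L b r \<le> n" and d: "d \<notin> range (phi b r)"
  have "{m. m < b ^ n \<and> Delta b r m = d} = {}" using Delta_phi[OF n] d by auto
  then show ?thesis unfolding PKr_def by simp
qed

lemma mu_off: "d \<notin> range (phi b r) \<Longrightarrow> mu b r d = 0"
proof (rule ccontr)
  assume d: "d \<notin> range (phi b r)" and ne: "mu b r d \<noteq> 0"
  then have "0 < \<bar>mu b r d\<bar>" by simp
  then obtain K where K: "L b r \<le> K" "real r / real b ^ K < \<bar>mu b r d\<bar>" using exists_K[OF b2 r1] by blast
  have "\<bar>mu b r d - PKr b r K d\<bar> \<le> real r / real b ^ K" by (rule mu_approx[OF b2 r1 K(1)])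
  then show False using K PKr_off[OF K(1) d] by simp
qed

lemma mu_lim: "(\<lambda>n. PKr b r n d) \<longlonglongrightarrow> mu b r d"
proof -
  have r0: "(\<lambda>n. real r / real b ^ n) \<longlonglongrightarrow> 0"
  proof -
    have "(\<lambda>n. real r * (1 / real b) ^ n) \<longlonglongrightarrow> real r * 0"
      using b2 by (intro tendsto_intros LIMSEQ_power_zero) auto
    then show ?thesis by (simp add: power_divide field_simps)
  qed
  have "(\<lambda>n. PKr b r n d - mu b r d) \<longlonglongrightarrow> 0"
  proof (rule Lim_transform_bound[OF _ r0])
    show "\<forall>\<^sub>F n in sequentially. norm (PKr b r n d - mu b r d) \<le> norm (real r / real b ^ n)"
      by (rule eventually_mono[OF eventually_ge_at_top[of "L b r"]])
         (use mu_approx[OF b2 r1] in \<open>auto simp: abs_minus_commute\<close>)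
  qed
  then show ?thesis by (rule LIM_zero_cancel)
qed

lemma sum_fiber:
  assumes n: "L b r \<le> n"
  shows "(\<Sum>m<b ^ n. h (Delta b r m)) = (\<Sum>k\<le>n. h (phi b r k) * real (pk b r n k))"
proof -
  have "(\<Sum>m<b ^ n. h (Delta b r m)) = (\<Sum>m<b ^ n. h (phi b r (CC b r n m)))"
    using Delta_phi[OF n] by simp
  also have "\<dots> = (\<Sum>k\<le>n. \<Sum>m\<in>{m. m \<in> {..<b ^ n} \<and> CC b r n m = k}. h (phi b r (CC b r n m)))"
    by (rule sum.group[symmetric]) (auto simp: CC_le[OF b2])
  also have "\<dots> = (\<Sum>k\<le>n. h (phi b r k) * real (pk b r n k))"
  proof (rule sum.cong[OF refl])
    fix k
    have "(\<Sum>m\<in>{m. m \<in> {..<b ^ n} \<and> CC b r n m = k}. h (phi b r (CC b r n m)))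
        = (\<Sum>m\<in>{m. m < b ^ n \<and> CC b r n m = k}. h (phi b r k))" by (intro sum.cong) auto
    also have "\<dots> = h (phi b r k) * real (pk b r n k)" unfolding pk_def by simp
    finally show "(\<Sum>m\<in>{m. m \<in> {..<b ^ n} \<and> CC b r n m = k}. h (phi b r (CC b r n m))) = h (phi b r k) * real (pk b r n k)" .
  qed
  finally show ?thesis .
qed

lemma moment_lim:
  fixes h :: "int \<Rightarrow> real" and H :: real
  assumes hb: "\<And>k. \<bar>h (phi b r k)\<bar> \<le> H * (real k + 1) ^ 2"
  shows "(\<lambda>n. (\<Sum>m<b ^ n. h (Delta b r m)) / real b ^ n) \<longlonglongrightarrow> infsum (\<lambda>d. h d * mu b r d) UNIV"
proof -
  define a where "a k n = h (phi b r k) * real (pk b r n k) / real b ^ n" for k n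
  define M where "M k = H * (real r * real b ^ L b r) * ((real k + 1) ^ 2 / 2 ^ k)" for k
  define c where "c k = h (phi b r k) * mu b r (phi b r k)" for k
  have bpos': "0 < real b ^ n" for n using b2 by simp
  have lim: "(\<lambda>n. a k n) \<longlonglongrightarrow> c k" for k
  proof -
    have "(\<lambda>n. h (phi b r k) * PKr b r n (phi b r k)) \<longlonglongrightarrow> c k"
      unfolding c_def by (intro tendsto_intros mu_lim)
    then show ?thesis
    proof (rule Lim_transform_eventually)
      show "\<forall>\<^sub>F n in sequentially. h (phi b r k) * PKr b r n (phi b r k) = a k n"
        by (rule eventually_mono[OF eventually_ge_at_top[of "L b r"]]) (simp add: a_def PKr_phi)
    qed
  qed
  have bound: "norm (a k n) \<le> M k" for k n
  proof -
    have "\<bar>h (phi b r 0)\<bar> \<le> H" using hb[of 0] by simp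
    then have H0: "0 \<le> H" using abs_ge_zero[of "h (phi b r 0)"] by linarith
    have p: "real (pk b r n k) / real b ^ n \<le> real r * real b ^ L b r / 2 ^ k"
      using pk_bound[OF b2 r1, of n k] bpos'[of n] by (simp add: field_simps)
    have "norm (a k n) = \<bar>h (phi b r k)\<bar> * (real (pk b r n k) / real b ^ n)"
      unfolding a_def by (simp add: abs_mult)
    also have "\<dots> \<le> (H * (real k + 1) ^ 2) * (real r * real b ^ L b r / 2 ^ k)"
      using hb p H0 by (intro mult_mono) auto
    also have "\<dots> = M k" unfolding M_def by (simp add: field_simps)
    finally show ?thesis .
  qed
  have sM: "summable M" unfolding M_def by (intro summable_mult summable_sq_geom)
  have T: "eventually (\<lambda>n. summable (\<lambda>k. norm (a k n))) sequentially \<and>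
           summable (\<lambda>n. norm (c n)) \<and> ((\<lambda>n. suminf (\<lambda>k. a k n)) \<longlongrightarrow> suminf c) sequentially"
  proof (rule tannerys_theorem[OF lim _ sM])
    have "\<forall>x. (\<lambda>(k,n). norm (a k n) \<le> M k) x" using bound by auto
    then show "\<forall>\<^sub>F (k, n) in at_top \<times>\<^sub>F sequentially. norm (a k n) \<le> M k"
      by (rule always_eventually)
  qed simp
  have fin: "suminf (\<lambda>k. a k n) = (\<Sum>m<b ^ n. h (Delta b r m)) / real b ^ n" if n: "L b r \<le> n" for n
  proof -
    have "suminf (\<lambda>k. a k n) = (\<Sum>k\<le>n. a k n)"
      by (rule suminf_finite) (auto simp: a_def pk_zero[OF b2 r1])
    also have "\<dots> = (\<Sum>k\<le>n. h (phi b r k) * real (pk b r n k)) / real b ^ n"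
      unfolding a_def by (simp add: sum_divide_distrib)
    also have "\<dots> = (\<Sum>m<b ^ n. h (Delta b r m)) / real b ^ n" using sum_fiber[OF n] by simp
    finally show ?thesis .
  qed
  have L1: "(\<lambda>n. (\<Sum>m<b ^ n. h (Delta b r m)) / real b ^ n) \<longlonglongrightarrow> suminf c"
  proof (rule Lim_transform_eventually)
    show "(\<lambda>n. suminf (\<lambda>k. a k n)) \<longlonglongrightarrow> suminf c" using T by blast
    show "\<forall>\<^sub>F n in sequentially. suminf (\<lambda>k. a k n) = (\<Sum>m<b ^ n. h (Delta b r m)) / real b ^ n"
      by (rule eventually_mono[OF eventually_ge_at_top[of "L b r"]]) (simp add: fin)
  qed
  have sc: "summable (\<lambda>n. norm (c n))" using T by blast
  have "infsum (\<lambda>d. h d * mu b r d) UNIV = infsum (\<lambda>d. h d * mu b r d) (range (phi b r))"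
    by (rule infsum_cong_neutral) (simp_all add: mu_off)
  also have "\<dots> = infsum ((\<lambda>d. h d * mu b r d) \<circ> phi b r) UNIV"
    by (rule infsum_reindex[OF phi_inj])
  also have "\<dots> = suminf c"
  proof (rule infsumI)
    have "c sums suminf c" by (rule summable_sums[OF summable_norm_cancel[OF sc]])
    then have "(c has_sum suminf c) UNIV" by (rule norm_summable_imp_has_sum[OF sc])
    moreover have "(\<lambda>d. h d * mu b r d) \<circ> phi b r = c" by (simp add: c_def fun_eq_iff)
    ultimately show "((\<lambda>d. h d * mu b r d) \<circ> phi b r has_sum suminf c) UNIV" by simp
  qed
  finally show ?thesis using L1 by simp
qed

end

definition S1 :: "nat \<Rightarrow> nat \<Rightarrow> nat \<Rightarrow> nat" where "S1 b r K = (\<Sum>m<b ^ K. CC b r K m)"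
definition S2 :: "nat \<Rightarrow> nat \<Rightarrow> nat \<Rightarrow> nat" where "S2 b r K = (\<Sum>m<b ^ K. (CC b r K m)^2)"
definition T0 :: "nat \<Rightarrow> nat \<Rightarrow> nat \<Rightarrow> nat" where "T0 b r K = (\<Sum>m<b ^ K. cr b r K m)"
definition T1 :: "nat \<Rightarrow> nat \<Rightarrow> nat \<Rightarrow> nat" where "T1 b r K = (\<Sum>m<b ^ K. cr b r K m * CC b r K m)"

lemma sum_q_div:
  fixes b t :: nat
  assumes "t \<le> b" "0 < b"
  shows "(\<Sum>q<b. (q + t) div b) = t"
proof -
  have "(\<Sum>q<b. (q + t) div b) = (\<Sum>q<b. if b \<le> q + t then 1 else 0)"
  proof (rule sum.cong[OF refl])
    fix q assume q: "q \<in> {..<b}"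
    show "(q + t) div b = (if b \<le> q + t then 1 else 0)"
    proof (cases "b \<le> q + t")
      case True
      have "(q + t) div b = 1" by (rule div_nat_eqI) (use True q assms in auto)
      then show ?thesis using True by simp
    qed simp
  qed
  also have "\<dots> = card {q\<in>{..<b}. b \<le> q + t}" by (rule card_filter_sum[symmetric]) simp
  also have "{q\<in>{..<b}. b \<le> q + t} = {b - t..<b}" using assms by auto
  finally show ?thesis using assms by simp
qed

context
  fixes b r :: nat
  assumes b2: "2 \<le> b"
begin

lemma cr_low:
  assumes "j \<le> K" "m' < b ^ K"
  shows "cr b r j (q * b ^ K + m') = cr b r j m'"
proof -
  have "b ^ K = b ^ (K - j) * b ^ j" using assms(1) by (simp add: power_add[symmetric])
  then have "q * b ^ K + m' = m' + (q * b ^ (K - j)) * b ^ j" by simp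
  then have "(q * b ^ K + m') mod b ^ j = m' mod b ^ j" by (simp only: mod_mult_self1)
  then show ?thesis unfolding cr_def by simp
qed

lemma CC_low:
  assumes "m' < b ^ K"
  shows "CC b r K (q * b ^ K + m') = CC b r K m'"
  unfolding CC_def by (intro sum.cong refl cr_low assms) auto

lemma cr_top:
  assumes "m' < b ^ K" "q < b"
  shows "cr b r (Suc K) (q * b ^ K + m') = (q + digit b r K + cr b r K m') div b"
proof -
  define B where "B = b ^ K"
  have B0: "0 < B" unfolding B_def using bpos[OF b2] .
  have bS: "b ^ Suc K = B * b" unfolding B_def by (simp add: power_Suc2)
  have lt: "q * B + m' < B * b"
  proof -
    have "q * B + m' < q * B + B" using assms(1) unfolding B_def by simp
    also have "\<dots> = (q + 1) * B" by simp
    also have "\<dots> \<le> b * B" using assms(2) by (intro mult_right_mono) auto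
    finally show ?thesis by (simp add: mult.commute)
  qed
  have m1: "(q * B + m') mod (B * b) = q * B + m'" using lt by simp
  have r1: "r mod (B * b) = B * digit b r K + r mod B"
    unfolding digit_def B_def by (rule mod_mult2_eq)
  have "cr b r (Suc K) (q * B + m') = (q * B + m' + (B * digit b r K + r mod B)) div (B * b)"
    unfolding cr_def bS m1 r1 ..
  also have "\<dots> = ((m' + r mod B) + (q + digit b r K) * B) div B div b"
    by (simp add: div_mult2_eq algebra_simps)
  also have "\<dots> = (q + digit b r K + (m' + r mod B) div B) div b"
    using B0 by (simp add: div_mult_self1 add.commute)
  also have "(m' + r mod B) div B = cr b r K m'" unfolding cr_def B_def using assms(1) by simp
  finally show ?thesis unfolding B_def by (simp add: add.assoc)
qed

lemma digit_le: "digit b r K \<le> b - 1"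
  using b2 unfolding digit_def by (simp add: less_Suc_eq_le[symmetric])

lemma sum_top:
  fixes g :: "nat \<Rightarrow> nat"
  shows "(\<Sum>m<b ^ Suc K. g m) = (\<Sum>m'<b ^ K. \<Sum>q<b. g (q * b ^ K + m'))"
proof -
  have "(\<Sum>m<b ^ Suc K. g m) = (\<Sum>m<b * b ^ K. g m)" by simp
  also have "\<dots> = (\<Sum>q<b. \<Sum>m'<b ^ K. g (q * b ^ K + m'))" by (rule sum_split_blocks)
  also have "\<dots> = (\<Sum>m'<b ^ K. \<Sum>q<b. g (q * b ^ K + m'))" by (rule sum.swap)
  finally show ?thesis .
qed

lemma inner:
  fixes K m' :: nat
  assumes m: "m' < b ^ K"
  defines "a \<equiv> digit b r K" and "c \<equiv> cr b r K m'" and "x \<equiv> CC b r K m'"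
  shows "(\<Sum>q<b. cr b r (Suc K) (q * b ^ K + m')) = a + c"
    and "(\<Sum>q<b. CC b r (Suc K) (q * b ^ K + m')) = b * x + (a + c)"
    and "(\<Sum>q<b. (CC b r (Suc K) (q * b ^ K + m'))^2) = b * x^2 + (2 * x + 1) * (a + c)"
    and "(\<Sum>q<b. cr b r (Suc K) (q * b ^ K + m') * CC b r (Suc K) (q * b ^ K + m')) = (x + 1) * (a + c)"
proof -
  define e where "e q = cr b r (Suc K) (q * b ^ K + m')" for q
  have ac: "a + c \<le> b" using digit_le[of K] cr_le1[OF b2, of r K m'] b2 unfolding a_def c_def by linarith
  have E: "(\<Sum>q<b. e q) = a + c"
  proof -
    have "(\<Sum>q<b. e q) = (\<Sum>q<b. (q + (a + c)) div b)"
      by (intro sum.cong refl) (simp add: e_def cr_top[OF m] a_def c_def add.assoc)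
    also have "\<dots> = a + c" using ac b2 by (intro sum_q_div) auto
    finally show ?thesis .
  qed
  have e1: "e q \<le> 1" for q unfolding e_def by (rule cr_le1[OF b2])
  have ee: "e q * e q = e q" for q using e1[of q] by (cases "e q") auto
  have CCe: "CC b r (Suc K) (q * b ^ K + m') = x + e q" for q
    unfolding CC_Suc[OF b2] CC_low[OF m] x_def e_def ..
  show "(\<Sum>q<b. cr b r (Suc K) (q * b ^ K + m')) = a + c" using E unfolding e_def .
  show "(\<Sum>q<b. CC b r (Suc K) (q * b ^ K + m')) = b * x + (a + c)"
    unfolding CCe using E by (simp add: sum.distrib)
  have sq: "(x + e q)^2 = x^2 + (2 * x + 1) * e q" for q
    using ee[of q] by (simp add: power2_eq_square algebra_simps)
  show "(\<Sum>q<b. (CC b r (Suc K) (q * b ^ K + m'))^2) = b * x^2 + (2 * x + 1) * (a + c)"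
    unfolding CCe sq using E by (simp add: sum.distrib sum_distrib_left[symmetric])
  have pr: "e q * (x + e q) = (x + 1) * e q" for q
    using ee[of q] by (simp add: algebra_simps)
  show "(\<Sum>q<b. cr b r (Suc K) (q * b ^ K + m') * CC b r (Suc K) (q * b ^ K + m')) = (x + 1) * (a + c)"
  proof -
    have "(\<Sum>q<b. e q * (x + e q)) = (\<Sum>q<b. (x + 1) * e q)" using pr by simp
    also have "\<dots> = (x + 1) * (a + c)" unfolding sum_distrib_left[symmetric] E ..
    finally show ?thesis unfolding CCe e_def .
  qed
qed

lemma rec_nat:
  fixes K :: nat
  defines "a \<equiv> digit b r K" and "B \<equiv> b ^ K"
  shows "T0 b r (Suc K) = a * B + T0 b r K"
    and "S1 b r (Suc K) = b * S1 b r K + a * B + T0 b r K"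
    and "S2 b r (Suc K) = b * S2 b r K + 2 * a * S1 b r K + 2 * T1 b r K + a * B + T0 b r K"
    and "T1 b r (Suc K) = a * S1 b r K + T1 b r K + a * B + T0 b r K"
proof -
  define X where "X m = CC b r K m" for m
  define C where "C m = cr b r K m" for m
  have "T0 b r (Suc K) = (\<Sum>m'<B. a + C m')"
    unfolding T0_def sum_top B_def a_def C_def by (intro sum.cong refl inner(1)) simp
  also have "\<dots> = a * B + T0 b r K" by (simp add: sum.distrib T0_def B_def C_def)
  finally show "T0 b r (Suc K) = a * B + T0 b r K" .
  have "S1 b r (Suc K) = (\<Sum>m'<B. b * X m' + (a + C m'))"
    unfolding S1_def sum_top B_def a_def C_def X_def by (intro sum.cong refl inner(2)) simp
  also have "\<dots> = b * S1 b r K + a * B + T0 b r K"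
    by (simp add: sum.distrib T0_def S1_def B_def C_def X_def sum_distrib_left)
  finally show "S1 b r (Suc K) = b * S1 b r K + a * B + T0 b r K" .
  have "S2 b r (Suc K) = (\<Sum>m'<B. b * X m'^2 + (2 * X m' + 1) * (a + C m'))"
    unfolding S2_def sum_top B_def a_def C_def X_def by (intro sum.cong refl inner(3)) simp
  also have "\<dots> = (\<Sum>m'<B. b * X m'^2 + 2 * a * X m' + 2 * (C m' * X m') + a + C m')"
    by (intro sum.cong refl) (simp add: algebra_simps)
  also have "\<dots> = b * S2 b r K + 2 * a * S1 b r K + 2 * T1 b r K + a * B + T0 b r K"
    by (simp add: sum.distrib T0_def S1_def S2_def T1_def B_def C_def X_def sum_distrib_left)
  finally show "S2 b r (Suc K) = b * S2 b r K + 2 * a * S1 b r K + 2 * T1 b r K + a * B + T0 b r K" .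
  have "T1 b r (Suc K) = (\<Sum>m'<B. (X m' + 1) * (a + C m'))"
    unfolding T1_def sum_top B_def a_def C_def X_def by (intro sum.cong refl inner(4)) simp
  also have "\<dots> = (\<Sum>m'<B. a * X m' + C m' * X m' + a + C m')"
    by (intro sum.cong refl) (simp add: algebra_simps)
  also have "\<dots> = a * S1 b r K + T1 b r K + a * B + T0 b r K"
    by (simp add: sum.distrib T0_def S1_def T1_def B_def C_def X_def sum_distrib_left)
  finally show "T1 b r (Suc K) = a * S1 b r K + T1 b r K + a * B + T0 b r K" .
qed

lemma init0: "T0 b r 0 = 0" "S1 b r 0 = 0" "S2 b r 0 = 0" "T1 b r 0 = 0"
  by (simp_all add: T0_def S1_def S2_def T1_def CC_def cr_def)

end

definition xs :: "nat \<Rightarrow> nat \<Rightarrow> nat \<Rightarrow> real" where "xs b r K = real (T0 b r K) / real b ^ K"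
definition m1 :: "nat \<Rightarrow> nat \<Rightarrow> nat \<Rightarrow> real" where "m1 b r K = real (S1 b r K) / real b ^ K"
definition m2 :: "nat \<Rightarrow> nat \<Rightarrow> nat \<Rightarrow> real" where "m2 b r K = real (S2 b r K) / real b ^ K"
definition t1 :: "nat \<Rightarrow> nat \<Rightarrow> nat \<Rightarrow> real" where "t1 b r K = real (T1 b r K) / real b ^ K"
definition VV :: "nat \<Rightarrow> nat \<Rightarrow> nat \<Rightarrow> real" where "VV b r K = m2 b r K - (m1 b r K)^2"
definition gg :: "nat \<Rightarrow> nat \<Rightarrow> nat \<Rightarrow> real" where "gg b r K = t1 b r K - m1 b r K * xs b r K"
definition yy :: "nat \<Rightarrow> nat \<Rightarrow> nat \<Rightarrow> real" where "yy b r K = xs b r K * (1 - xs b r K)"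

context
  fixes b r :: nat
  assumes b2: "2 \<le> b"
begin

lemma xs_rec: "xs b r (Suc K) = (real (digit b r K) + xs b r K) / real b"
  using b2 unfolding xs_def rec_nat[OF b2] by (simp add: field_simps)

lemma VV_rec: "VV b r (Suc K) = VV b r K + yy b r (Suc K) + 2 * gg b r K / real b"
  and gg_rec: "gg b r (Suc K) = yy b r (Suc K) + gg b r K / real b"
proof -
  define B where "B = real b ^ K"
  define a where "a = real (digit b r K)"
  have B0: "0 < B" unfolding B_def using b2 by simp
  have bb: "0 < real b" using b2 by simp
  have eT0: "real (T0 b r (Suc K)) = a * B + real (T0 b r K)"
    unfolding rec_nat[OF b2] a_def B_def by simp
  have eS1: "real (S1 b r (Suc K)) = real b * real (S1 b r K) + a * B + real (T0 b r K)"
    unfolding rec_nat[OF b2] a_def B_def by simp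
  have eS2: "real (S2 b r (Suc K)) = real b * real (S2 b r K) + 2 * a * real (S1 b r K) + 2 * real (T1 b r K) + a * B + real (T0 b r K)"
    unfolding rec_nat[OF b2] a_def B_def by simp
  have eT1: "real (T1 b r (Suc K)) = a * real (S1 b r K) + real (T1 b r K) + a * B + real (T0 b r K)"
    unfolding rec_nat[OF b2] a_def B_def by simp
  have bS: "real b ^ Suc K = real b * B" unfolding B_def by simp
  show "VV b r (Suc K) = VV b r K + yy b r (Suc K) + 2 * gg b r K / real b"
    unfolding VV_def yy_def gg_def m1_def m2_def t1_def xs_def bS eT0 eS1 eS2 eT1
    using B0 bb unfolding B_def[symmetric]
    by (simp add: field_simps power2_eq_square)
  show "gg b r (Suc K) = yy b r (Suc K) + gg b r K / real b"
    unfolding yy_def gg_def m1_def t1_def xs_def bS eT0 eS1 eT1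
    using B0 bb unfolding B_def[symmetric]
    by (simp add: field_simps power2_eq_square)
qed

lemma init: "xs b r 0 = 0" "VV b r 0 = 0" "gg b r 0 = 0"
  by (simp_all add: xs_def VV_def gg_def m1_def m2_def t1_def init0[OF b2])

lemma xs_bounds: "0 \<le> xs b r K \<and> xs b r K < 1"
proof (induct K)
  case 0 then show ?case by (simp add: init)
next
  case (Suc K)
  have d: "real (digit b r K) \<le> real b - 1" using digit_le[OF b2, of r K] b2 by linarith
  have "real (digit b r K) + xs b r K < real b" using d Suc by linarith
  then show ?case using b2 Suc unfolding xs_rec by (simp add: field_simps)
qed

lemma yy_nonneg: "0 \<le> yy b r K"
  using xs_bounds[of K] unfolding yy_def by simp

lemma gg_nonneg: "0 \<le> gg b r K"
proof (induct K)
  case 0 then show ?case by (simp add: init)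
next
  case (Suc K) then show ?case using yy_nonneg[of "Suc K"] b2 unfolding gg_rec by simp
qed

lemma VV_mono: "VV b r K \<le> VV b r (Suc K)"
  using yy_nonneg[of "Suc K"] gg_nonneg[of K] b2 unfolding VV_rec by simp

lemma VV_Phi: "(real b - 1) * VV b r K + 2 * gg b r K = (real b + 1) * (\<Sum>j<K. yy b r (Suc j))"
proof (induct K)
  case 0 then show ?case by (simp add: init)
next
  case (Suc K)
  have bb: "real b > 0" using b2 by simp
  have "(real b - 1) * VV b r (Suc K) + 2 * gg b r (Suc K)
      = ((real b - 1) * VV b r K + 2 * gg b r K) + (real b + 1) * yy b r (Suc K)"
    unfolding VV_rec gg_rec using bb by (simp add: field_simps)
  then show ?case using Suc by (simp add: field_simps)
qed

end

lemma y_sym: "(1 - x) * (1 - (1 - x)) = x * (1 - (x::real))" by (simp add: algebra_simps)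

lemma min_sym: "min (1 - x) (1 - (1 - x)) = min x (1 - (x::real))" by (simp add: min.commute)

lemma ymin: "x * (1 - x) = min x (1 - x) * (1 - min x (1 - (x::real)))"
  by (cases "x \<le> 1 - x") (simp_all add: min_def algebra_simps)

lemma step_start:
  fixes B x :: real
  assumes "2 \<le> B" "0 \<le> x" "x \<le> 1"
  shows "x * (1 - x) + B / (B - 1) * min x (1 - x) \<le> 1/4 + B / (2 * (B - 1))"
proof -
  define u where "u = min x (1 - x)"
  have u: "0 \<le> u" "u \<le> 1/2" using assms unfolding u_def min_def by auto
  have y: "x * (1 - x) = u * (1 - u)" unfolding u_def by (rule ymin)
  have "u * (1 - u) \<le> 1/4"
  proof -
    have "0 \<le> (u - 1/2)^2" by simp
    then show ?thesis by (simp add: power2_eq_square algebra_simps)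
  qed
  moreover have "B / (B - 1) * u \<le> B / (B - 1) * (1/2)" using u assms by (intro mult_left_mono) auto
  ultimately have F1: "u * (1 - u) + B / (B - 1) * u \<le> 1/4 + B / (B - 1) * (1/2)" by (rule add_mono)
  have F2: "B / (B - 1) * (1/2) = B / (2 * (B - 1))" by simp
  show ?thesis unfolding y u_def[symmetric] using F1 unfolding F2 .
qed

lemma step_non:
  fixes B p :: real
  assumes B: "2 \<le> B" and p: "0 \<le> p" "p \<le> 1"
  shows "(p/B/B) * (1 - p/B/B) + B/(B-1) * min (p/B/B) (1 - p/B/B) \<le> B/(B-1) * min (p/B) (1 - p/B)"
proof -
  define t where "t = p / B"
  have t: "0 \<le> t" "t \<le> 1/2" using B p unfolding t_def by (auto simp: field_simps)
  have tB: "t / B \<le> 1/2" "0 \<le> t / B" using t B by (auto simp: field_simps)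
  have m1: "min t (1 - t) = t" using t by simp
  have m2: "min (t/B) (1 - t/B) = t/B" using tB by simp
  have "(t/B) * (1 - t/B) \<le> t / B" by (rule mult_left_le) (use tB in auto)
  moreover have "t / B + B/(B-1) * (t/B) = B/(B-1) * t - (B - 1) / (B-1) * t / B * (B - 1) + t / B * 0"
    using B by (simp add: field_simps)
  moreover have "t / B + B/(B-1) * (t/B) \<le> B/(B-1) * t"
  proof -
    have "t / B + B/(B-1) * (t/B) = t * (1/B + 1/(B-1))" using B by (simp add: field_simps)
    also have "\<dots> \<le> t * (B/(B-1))"
    proof (rule mult_left_mono)
      have "1/B \<le> 1" using B by simp
      moreover have "B/(B-1) = 1 + 1/(B-1)" using B by (simp add: field_simps)
      ultimately show "1/B + 1/(B-1) \<le> B/(B-1)" by linarith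
    qed (use t in auto)
    finally show ?thesis by (simp add: mult.commute)
  qed
  ultimately show ?thesis unfolding t_def[symmetric] m1 m2 by linarith
qed

lemma lowA:
  fixes B u :: real
  assumes B: "2 \<le> B" and u: "1/B \<le> u" "u \<le> 1"
  shows "(B^2 - 1) / B^4 \<le> (u/B) * (1 - u/B)"
proof -
  define v where "v = u / B"
  have v1: "1/B^2 \<le> v" using u B unfolding v_def by (simp add: field_simps power2_eq_square)
  have v2: "v \<le> 1/B" using u B unfolding v_def by (simp add: field_simps)
  have "1/B + 1/B^2 \<le> 1"
  proof -
    have "2 * 2 \<le> B * B" using B by (intro mult_mono) auto
    then have "1/B \<le> 1/2" "1/B^2 \<le> 1/4" using B by (simp_all add: field_simps power2_eq_square)
    then show ?thesis by simp
  qed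
  then have "0 \<le> (v - 1/B^2) * (1 - 1/B^2 - v)" using v1 v2 by (intro mult_nonneg_nonneg) auto
  then have "(1/B^2) * (1 - 1/B^2) \<le> v * (1 - v)" by (simp add: algebra_simps)
  moreover have "(1/B^2) * (1 - 1/B^2) = (B^2 - 1) / B^4" using B by (simp add: field_simps power2_eq_square power4_eq_xxxx)
  ultimately show ?thesis unfolding v_def by simp
qed

lemma lowB:
  fixes B u :: real
  assumes B: "2 \<le> B" and u: "1/B \<le> u" "u \<le> 1"
  shows "(B - 1) / B^2 \<le> u * (1 - u) + (u/B) * (1 - u/B)"
proof -
  have e: "u * (1 - u) + (u/B) * (1 - u/B) - (B - 1) / B^2 = (1 - u) * ((1 + 1/B^2) * u - (B - 1)/B^2)"
    using B by (simp add: field_simps power2_eq_square)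
  have "(B - 1)/B^2 \<le> (1 + 1/B^2) * u"
  proof -
    have "(B - 1)/B^2 \<le> 1/B" using B by (simp add: field_simps power2_eq_square)
    also have "\<dots> \<le> u" by (rule u(1))
    also have "\<dots> \<le> (1 + 1/B^2) * u"
    proof -
      have "0 < 1/B" using B by simp
      then have "0 \<le> u" using u by linarith
      then show ?thesis by (simp add: algebra_simps)
    qed
    finally show ?thesis .
  qed
  then have "0 \<le> (1 - u) * ((1 + 1/B^2) * u - (B - 1)/B^2)" using u by (intro mult_nonneg_nonneg) auto
  then show ?thesis using e by linarith
qed

lemma lowMid:
  fixes B x :: real
  assumes B: "2 \<le> B" and x: "1/B \<le> x" "x \<le> 1 - 1/B"
  shows "(B - 1) / B^2 \<le> x * (1 - x)"
proof -
  have "0 \<le> (x - 1/B) * (1 - 1/B - x)" using x by (intro mult_nonneg_nonneg) auto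
  then have "(1/B) * (1 - 1/B) \<le> x * (1 - x)" by (simp add: algebra_simps)
  moreover have "(1/B) * (1 - 1/B) = (B - 1) / B^2" using B by (simp add: field_simps power2_eq_square)
  ultimately show ?thesis by simp
qed

definition st :: "nat \<Rightarrow> nat \<Rightarrow> nat \<Rightarrow> bool" where
  "st b r k = (k = 0 \<or> (digit b r k \<noteq> 0 \<and> digit b r k \<noteq> b - 1) \<or> digit b r k \<noteq> digit b r (k - 1))"

lemma rho_st: "rho b r = card {k. k < ndigits b r \<and> st b r k}"
  unfolding rho_def st_def ..

context
  fixes b r :: nat
  assumes b2: "2 \<le> b" and r1: "1 \<le> r"
begin

definition "QQ j = real b / (real b - 1) * min (xs b r j) (1 - xs b r j)"
definition "cb = 1/4 + real b / (2 * (real b - 1))"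
definition "st' j = ((j < L b r \<and> st b r j) \<or> j = L b r)"

lemma QQ_nonneg: "0 \<le> QQ j"
  using xs_bounds[OF b2, of r j] b2 unfolding QQ_def by (intro mult_nonneg_nonneg) auto

lemma QQ0: "QQ 0 = 0" unfolding QQ_def init[OF b2] by simp

lemma nonstart:
  assumes "\<not> st' j"
  shows "\<exists>i. j = Suc i \<and> digit b r j = digit b r i \<and> (digit b r j = 0 \<or> digit b r j = b - 1)"
proof -
  have L1: "1 \<le> L b r" by (rule L_pos[OF b2 r1])
  show ?thesis
  proof (cases "L b r < j")
    case True
    then obtain i where i: "j = Suc i" by (cases j) auto
    have "digit b r j = 0" "digit b r i = 0" using True i digit_high[OF b2 r1] by auto
    then show ?thesis using i by auto
  next
    case False
    then have "j < L b r" "\<not> st b r j" using assms unfolding st'_def by auto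
    then show ?thesis unfolding st_def by (cases j) auto
  qed
qed

lemma step_up: "yy b r (Suc j) + QQ (Suc j) \<le> QQ j + (if st' j then cb else 0)"
proof (cases "st' j")
  case True
  have "yy b r (Suc j) + QQ (Suc j) \<le> cb"
    unfolding yy_def QQ_def cb_def using b2 xs_bounds[OF b2, of r "Suc j"]
    by (intro step_start) auto
  then show ?thesis using True QQ_nonneg[of j] by simp
next
  case False
  obtain i where i: "j = Suc i" "digit b r j = digit b r i" "digit b r j = 0 \<or> digit b r j = b - 1"
    using nonstart[OF False] by blast
  define B where "B = real b"
  have B: "2 \<le> B" unfolding B_def using b2 by simp
  have xi: "0 \<le> xs b r i" "xs b r i < 1" using xs_bounds[OF b2] by auto
  from i(3) show ?thesis
  proof
    assume d0: "digit b r j = 0"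
    define p where "p = xs b r i"
    have e1: "xs b r j = p / B" unfolding i(1) xs_rec[OF b2] p_def B_def using d0 i by simp
    have e2: "xs b r (Suc j) = p / B / B" using e1 d0 unfolding xs_rec[OF b2] B_def by simp
    have "yy b r (Suc j) + QQ (Suc j) \<le> QQ j"
      unfolding yy_def QQ_def e1 e2 B_def[symmetric] using B xi unfolding p_def[symmetric]
      by (intro step_non) auto
    then show ?thesis using False by simp
  next
    assume d1: "digit b r j = b - 1"
    define p where "p = 1 - xs b r i"
    have db: "real (digit b r j) = B - 1" using d1 b2 unfolding B_def by simp
    have e1: "xs b r j = 1 - p / B" unfolding i(1) xs_rec[OF b2] p_def B_def
      using db i B unfolding B_def by (simp add: field_simps)
    have e2: "xs b r (Suc j) = 1 - p / B / B" unfolding xs_rec[OF b2] e1 db using B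
      unfolding B_def by (simp add: field_simps)
    have "yy b r (Suc j) + QQ (Suc j) \<le> QQ j"
      unfolding yy_def QQ_def e1 e2 B_def[symmetric] y_sym min_sym using B xi unfolding p_def[symmetric]
      by (intro step_non) (auto simp: p_def)
    then show ?thesis using False by simp
  qed
qed

lemma sum_up: "(\<Sum>j<K. yy b r (Suc j)) + QQ K \<le> (\<Sum>j<K. if st' j then cb else 0)"
proof (induct K)
  case 0 then show ?case by (simp add: QQ0)
next
  case (Suc K) then show ?case using step_up[of K] by simp
qed

lemma rho_pos: "1 \<le> rho b r"
proof -
  have "0 \<in> {k. k < L b r \<and> st b r k}" using L_pos[OF b2 r1] unfolding st_def by simp
  then have "{k. k < L b r \<and> st b r k} \<noteq> {}" by blast
  then show ?thesis unfolding rho_st by (simp add: card_gt_0_iff Suc_le_eq)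
qed

lemma count_st': "card {j\<in>{..<K}. st' j} \<le> rho b r + 1"
proof -
  have "card {j\<in>{..<K}. st' j} \<le> card ({k. k < L b r \<and> st b r k} \<union> {L b r})"
    by (rule card_mono) (auto simp: st'_def)
  also have "\<dots> \<le> card {k. k < L b r \<and> st b r k} + card {L b r}" by (rule card_Un_le)
  finally show ?thesis unfolding rho_st by simp
qed

lemma Sk_upper: "(\<Sum>j<K. yy b r (Suc j)) \<le> cb * (real (rho b r) + 1)"
proof -
  have cb0: "0 \<le> cb" unfolding cb_def using b2 by simp
  have "(\<Sum>j<K. yy b r (Suc j)) \<le> (\<Sum>j<K. if st' j then cb else 0)"
    using sum_up[of K] QQ_nonneg[of K] by linarith
  also have "\<dots> = cb * real (card {j\<in>{..<K}. st' j})"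
    by (simp add: sum.If_cases Int_def)
  also have "\<dots> \<le> cb * (real (rho b r) + 1)"
    using count_st'[of K] cb0 by (intro mult_left_mono) auto
  finally show ?thesis .
qed

lemma VV_upper: "(real b - 1)^2 * VV b r K \<le> 2 * real b ^ 2 * real (rho b r)"
proof -
  define B where "B = real b"
  have B: "2 \<le> B" unfolding B_def using b2 by simp
  define S where "S = (\<Sum>j<K. yy b r (Suc j))"
  have S0: "0 \<le> S" unfolding S_def using yy_nonneg[OF b2] by (simp add: sum_nonneg)
  have "(B - 1) * VV b r K \<le> (B + 1) * S"
    using VV_Phi[OF b2, of r K] gg_nonneg[OF b2, of r K] unfolding S_def B_def by linarith
  then have "(B - 1) * ((B - 1) * VV b r K) \<le> (B - 1) * ((B + 1) * S)"
    using B by (intro mult_left_mono) auto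
  then have a: "(B - 1)^2 * VV b r K \<le> (B^2 - 1) * S" by (simp add: power2_eq_square algebra_simps)
  have "S \<le> cb * (real (rho b r) + 1)" unfolding S_def by (rule Sk_upper)
  then have "(B^2 - 1) * S \<le> (B^2 - 1) * (cb * (real (rho b r) + 1))"
  proof (rule mult_left_mono)
    have "1 \<le> B^2" using B by (intro one_le_power) auto
    then show "0 \<le> B^2 - 1" by simp
  qed
  also have "\<dots> = ((B^2 - 1) / 4 + B * (B + 1) / 2) * (real (rho b r) + 1)"
    unfolding cb_def B_def[symmetric] using B by (simp add: field_simps power2_eq_square)
  also have "\<dots> \<le> B^2 * (2 * real (rho b r))"
  proof (rule mult_mono)
    show "(B^2 - 1) / 4 + B * (B + 1) / 2 \<le> B^2"
    proof -
      have "0 \<le> (B - 1)^2" by simp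
      then show ?thesis by (simp add: power2_eq_square field_simps)
    qed
    show "real (rho b r) + 1 \<le> 2 * real (rho b r)" using rho_pos by simp
  qed (use B in \<open>auto simp: power2_eq_square\<close>)
  finally show ?thesis using a unfolding B_def by simp
qed

end

context
  fixes b r :: nat
  assumes b2: "2 \<le> b" and r1: "1 \<le> r"
begin

definition "Gs = {j. j \<le> L b r \<and> ((j < L b r \<and> st b r j) \<or> j = L b r) \<and> \<not> (j = 0 \<and> digit b r 0 = 0)}"

lemma Gs_bounds:
  assumes j: "j \<in> Gs"
  shows "(real b ^ 2 - 1) / real b ^ 4 \<le> yy b r (Suc j)"
    and "(real b - 1) / real b ^ 2 \<le> yy b r j + yy b r (Suc j)"
proof -
  define B where "B = real b"
  have B: "2 \<le> B" unfolding B_def using b2 by simp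
  have xb: "0 \<le> xs b r k" "xs b r k < 1" for k using xs_bounds[OF b2] by auto
  have yn: "0 \<le> yy b r k" for k by (rule yy_nonneg[OF b2])
  have jL: "j \<le> L b r" and js: "(j < L b r \<and> st b r j) \<or> j = L b r" and jz: "\<not> (j = 0 \<and> digit b r 0 = 0)"
    using j unfolding Gs_def by auto
  have mAB: "(B^2 - 1) / B^4 \<le> (B - 1) / B^2"
  proof -
    have "2 * B \<le> B * B" using B by (intro mult_right_mono) auto
    then have "B + 1 \<le> B * B" using B by linarith
    then have "(B - 1) * (B + 1) \<le> (B - 1) * (B * B)" using B by (intro mult_left_mono) auto
    then have "B^2 - 1 \<le> (B - 1) * B^2" by (simp add: power2_eq_square algebra_simps)
    then have "(B^2 - 1) / B^4 \<le> (B - 1) * B^2 / B^4" using B by (intro divide_right_mono) auto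
    also have "(B - 1) * B^2 / B^4 = (B - 1) / B^2" using B by (simp add: field_simps power2_eq_square power4_eq_xxxx)
    finally show ?thesis .
  qed
  have gen: "(B^2 - 1) / B^4 \<le> yy b r (Suc j) \<and> (B - 1) / B^2 \<le> yy b r j + yy b r (Suc j)"
    if u: "1/B \<le> u" "u \<le> 1" and ey: "yy b r j = u * (1 - u)" and ey': "yy b r (Suc j) = (u/B) * (1 - u/B)" for u
    using lowA[OF B u] lowB[OF B u] ey ey' by simp
  consider (mid) "digit b r j \<noteq> 0" "digit b r j \<noteq> b - 1" | (zero) "digit b r j = 0" | (top) "digit b r j = b - 1"
    by blast
  then have "(B^2 - 1) / B^4 \<le> yy b r (Suc j) \<and> (B - 1) / B^2 \<le> yy b r j + yy b r (Suc j)"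
  proof cases
    case mid
    have d1: "1 \<le> real (digit b r j)" using mid by simp
    have d2: "real (digit b r j) \<le> B - 2" using mid digit_le[OF b2, of r j] b2 unfolding B_def by linarith
    have x1: "1/B \<le> xs b r (Suc j)" unfolding xs_rec[OF b2] B_def[symmetric] using d1 xb[of j] B
      by (simp add: field_simps)
    have x2: "xs b r (Suc j) \<le> 1 - 1/B"
    proof -
      have "real (digit b r j) + xs b r j \<le> B - 1" using d2 xb[of j] by linarith
      then have "(real (digit b r j) + xs b r j) / B \<le> (B - 1) / B" using B by (intro divide_right_mono) auto
      also have "(B - 1) / B = 1 - 1/B" using B by (simp add: field_simps)
      finally show ?thesis unfolding xs_rec[OF b2] B_def .
    qed
    have "(B - 1) / B^2 \<le> yy b r (Suc j)" unfolding yy_def by (rule lowMid[OF B x1 x2])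
    then show ?thesis using mAB yn[of j] by linarith
  next
    case zero
    then have j0: "j \<noteq> 0" using jz by (cases "j = 0") auto
    then obtain i where i: "j = Suc i" by (cases j) auto
    have di: "digit b r i \<noteq> 0"
    proof (cases "j = L b r")
      case True
      then have "i = L b r - 1" using i by simp
      then show ?thesis using digit_top[OF b2 r1] by simp
    next
      case False
      then have "st b r j" using js by simp
      then show ?thesis using zero i b2 unfolding st_def by auto
    qed
    define u where "u = xs b r j"
    have u1: "1/B \<le> u" unfolding u_def i xs_rec[OF b2] B_def[symmetric] using di xb[of i] B
      by (simp add: field_simps)
    have u2: "u \<le> 1" using xb[of j] unfolding u_def by simp
    have e: "xs b r (Suc j) = u / B" unfolding xs_rec[OF b2] zero u_def B_def by simp
    show ?thesis by (rule gen[OF u1 u2]) (simp_all add: yy_def e u_def)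
  next
    case top
    have db: "real (digit b r j) = B - 1" using top b2 unfolding B_def by simp
    define u where "u = 1 - xs b r j"
    have u1: "1/B \<le> u"
    proof (cases j)
      case 0 then show ?thesis unfolding u_def using init[OF b2] B by simp
    next
      case (Suc i)
      have jL': "j \<noteq> L b r" using top digit_high[OF b2 r1, of "L b r"] b2 by auto
      then have "st b r j" using js by simp
      then have "digit b r i \<noteq> b - 1" using top Suc b2 unfolding st_def by auto
      then have "real (digit b r i) \<le> B - 2" using digit_le[OF b2, of r i] b2 unfolding B_def by linarith
      then show ?thesis unfolding u_def Suc xs_rec[OF b2] B_def[symmetric] using xb[of i] B
        by (simp add: field_simps)
    qed
    have u2: "u \<le> 1" using xb[of j] unfolding u_def by simp
    have e: "xs b r (Suc j) = 1 - u / B" unfolding xs_rec[OF b2] db u_def using B unfolding B_def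
      by (simp add: field_simps)
    have e0: "xs b r j = 1 - u" unfolding u_def by simp
    show ?thesis by (rule gen[OF u1 u2]) (simp_all only: yy_def e e0 y_sym)
  qed
  then show "(real b ^ 2 - 1) / real b ^ 4 \<le> yy b r (Suc j)"
    and "(real b - 1) / real b ^ 2 \<le> yy b r j + yy b r (Suc j)" unfolding B_def by auto
qed

lemma Gs_card: "rho b r \<le> card Gs"
proof -
  define A where "A = {k. k < L b r \<and> st b r k}"
  have L1: "1 \<le> L b r" by (rule L_pos[OF b2 r1])
  have fA: "finite A" unfolding A_def by simp
  have 0: "0 \<in> A" unfolding A_def st_def using L1 by simp
  have LA: "L b r \<notin> A" unfolding A_def by simp
  have cA: "0 < card A" using fA 0 by (auto simp: card_gt_0_iff)
  have "card A = card (A - {0}) + 1" using fA 0 cA by (simp add: card_Diff_singleton)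
  also have "\<dots> = card ((A - {0}) \<union> {L b r})" using fA LA by simp
  also have "\<dots> \<le> card Gs"
  proof (rule card_mono)
    show "finite Gs" unfolding Gs_def by (rule finite_subset[of _ "{..L b r}"]) auto
    show "A - {0} \<union> {L b r} \<subseteq> Gs" unfolding A_def Gs_def using L1 by auto
  qed
  finally show ?thesis unfolding rho_st A_def by simp
qed

lemma Sk_lower:
  assumes K: "L b r < K"
  shows "real (rho b r) * ((real b ^ 2 - 1) / real b ^ 4) \<le> (\<Sum>j<K. yy b r (Suc j))"
    and "real (rho b r) * ((real b - 1) / real b ^ 2) \<le> 2 * (\<Sum>j<K. yy b r (Suc j))"
proof -
  have yn: "0 \<le> yy b r k" for k by (rule yy_nonneg[OF b2])
  have GK: "Gs \<subseteq> {..<K}" using K unfolding Gs_def by auto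
  have fG: "finite Gs" using GK finite_subset by blast
  have s1: "(\<Sum>j\<in>Gs. yy b r (Suc j)) \<le> (\<Sum>j<K. yy b r (Suc j))"
    by (rule sum_mono2) (use GK yn in auto)
  obtain n where n: "K = Suc n" using K by (cases K) auto
  have s2: "(\<Sum>j\<in>Gs. yy b r j) \<le> (\<Sum>j<K. yy b r (Suc j))"
  proof -
    have "(\<Sum>j\<in>Gs. yy b r j) \<le> (\<Sum>j<K. yy b r j)" by (rule sum_mono2) (use GK yn in auto)
    also have "\<dots> = yy b r 0 + (\<Sum>j<n. yy b r (Suc j))" unfolding n by (rule sum.lessThan_Suc_shift)
    also have "\<dots> \<le> (\<Sum>j<K. yy b r (Suc j))" unfolding n using yn[of "Suc n"]
      by (simp add: init[OF b2] yy_def)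
    finally show ?thesis .
  qed
  have c: "real (rho b r) \<le> real (card Gs)" using Gs_card by simp
  have mA0: "0 \<le> (real b ^ 2 - 1) / real b ^ 4"
  proof -
    have "1 \<le> real b ^ 2" using b2 by (intro one_le_power) auto
    then show ?thesis by simp
  qed
  have mB0: "0 \<le> (real b - 1) / real b ^ 2" using b2 by simp
  have "real (rho b r) * ((real b ^ 2 - 1) / real b ^ 4) \<le> real (card Gs) * ((real b ^ 2 - 1) / real b ^ 4)"
    using c mA0 by (intro mult_right_mono) auto
  also have "\<dots> = (\<Sum>j\<in>Gs. (real b ^ 2 - 1) / real b ^ 4)" by simp
  also have "\<dots> \<le> (\<Sum>j\<in>Gs. yy b r (Suc j))" using Gs_bounds(1) by (intro sum_mono) auto
  finally show "real (rho b r) * ((real b ^ 2 - 1) / real b ^ 4) \<le> (\<Sum>j<K. yy b r (Suc j))" using s1 by linarith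
  have "real (rho b r) * ((real b - 1) / real b ^ 2) \<le> real (card Gs) * ((real b - 1) / real b ^ 2)"
    using c mB0 by (intro mult_right_mono) auto
  also have "\<dots> = (\<Sum>j\<in>Gs. (real b - 1) / real b ^ 2)" by simp
  also have "\<dots> \<le> (\<Sum>j\<in>Gs. yy b r j + yy b r (Suc j))" using Gs_bounds(2) by (intro sum_mono) auto
  also have "\<dots> = (\<Sum>j\<in>Gs. yy b r j) + (\<Sum>j\<in>Gs. yy b r (Suc j))" by (rule sum.distrib)
  finally show "real (rho b r) * ((real b - 1) / real b ^ 2) \<le> 2 * (\<Sum>j<K. yy b r (Suc j))"
    using s1 s2 by linarith
qed

end

context
  fixes b r :: nat
  assumes b2: "2 \<le> b" and r1: "1 \<le> r"
begin

lemma psi_step: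
  assumes K: "L b r \<le> K"
  shows "gg b r (Suc K) + 2 * xs b r (Suc K) \<le> 3/4 * (gg b r K + 2 * xs b r K)"
proof -
  define B where "B = real b"
  have B: "2 \<le> B" unfolding B_def using b2 by simp
  have d: "digit b r K = 0" by (rule digit_high[OF b2 r1 K])
  have x: "0 \<le> xs b r K" "xs b r K < 1" using xs_bounds[OF b2] by auto
  have g: "0 \<le> gg b r K" by (rule gg_nonneg[OF b2])
  have ex: "xs b r (Suc K) = xs b r K / B" unfolding xs_rec[OF b2] d B_def by simp
  have xs1: "0 \<le> xs b r (Suc K)" "xs b r (Suc K) < 1" using xs_bounds[OF b2] by auto
  have "yy b r (Suc K) \<le> xs b r (Suc K)" unfolding yy_def using xs1 by (simp add: mult_left_le)
  then have "gg b r (Suc K) + 2 * xs b r (Suc K) \<le> (gg b r K + 3 * xs b r K) / B"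
    unfolding gg_rec[OF b2] ex B_def[symmetric] by (simp add: add_divide_distrib)
  also have "\<dots> \<le> (gg b r K + 3 * xs b r K) / 2" using B g x by (intro divide_left_mono) auto
  also have "\<dots> \<le> 3/4 * (gg b r K + 2 * xs b r K)" using g by simp
  finally show ?thesis .
qed

lemma psi_pow: "gg b r (L b r + n) + 2 * xs b r (L b r + n) \<le> (3/4)^n * (gg b r (L b r) + 2 * xs b r (L b r))"
proof (induct n)
  case 0 then show ?case by simp
next
  case (Suc n)
  have "gg b r (L b r + Suc n) + 2 * xs b r (L b r + Suc n) \<le> 3/4 * (gg b r (L b r + n) + 2 * xs b r (L b r + n))"
    using psi_step[of "L b r + n"] by simp
  also have "\<dots> \<le> 3/4 * ((3/4)^n * (gg b r (L b r) + 2 * xs b r (L b r)))"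
    using Suc by (intro mult_left_mono) auto
  finally show ?case by simp
qed

lemma gg_small:
  assumes e: "0 < e"
  shows "\<exists>K. L b r < K \<and> gg b r K \<le> e"
proof -
  define C where "C = gg b r (L b r) + 2 * xs b r (L b r)"
  have C0: "0 \<le> C" unfolding C_def using gg_nonneg[OF b2, of r "L b r"] xs_bounds[OF b2, of r "L b r"] by simp
  have "(\<lambda>n. (3/4::real)^n) \<longlonglongrightarrow> 0" by (rule LIMSEQ_power_zero) simp
  then have "(\<lambda>n. (3/4::real)^n * C) \<longlonglongrightarrow> 0 * C" by (rule tendsto_mult_right)
  then have "eventually (\<lambda>n. (3/4::real)^n * C < e) sequentially" by (rule order_tendstoD(2)) (simp add: e)
  then obtain N where N: "\<forall>n\<ge>N. (3/4::real)^n * C < e" unfolding eventually_sequentially by blast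
  define n where "n = N"
  have n: "(3/4::real)^n * C < e" using N unfolding n_def by simp
  define K where "K = L b r + Suc n"
  have "gg b r K \<le> gg b r K + 2 * xs b r K" using xs_bounds[OF b2, of r K] by simp
  also have "\<dots> \<le> (3/4)^(Suc n) * C" unfolding K_def C_def by (rule psi_pow)
  also have "\<dots> \<le> (3/4)^n * C" using C0 by (intro mult_right_mono power_decreasing) auto
  finally have "gg b r K < e" using n by linarith
  then show ?thesis unfolding K_def by (intro exI[of _ "L b r + Suc n"]) simp
qed

lemma VV_lower: "\<exists>K. real b / 4 * real (rho b r) \<le> (real b - 1)^2 * VV b r K"
proof -
  define B where "B = real b"
  have B: "2 \<le> B" unfolding B_def using b2 by simp
  have B0: "0 < B" using B by simp
  define R where "R = real (rho b r)"
  have R1: "1 \<le> R" unfolding R_def using rho_pos[OF b2 r1] by simp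
  have eps: "0 < 1 / (32 * B^3)" using B by simp
  obtain K where K: "L b r < K" "gg b r K \<le> 1 / (32 * B^3)" using gg_small[OF eps] by blast
  define S where "S = (\<Sum>j<K. yy b r (Suc j))"
  define g where "g = gg b r K"
  have g0: "0 \<le> g" unfolding g_def by (rule gg_nonneg[OF b2])
  have gK: "g \<le> 1 / (32 * B^3)" using K(2) unfolding g_def .
  have SA: "R * ((B^2 - 1) / B^4) \<le> S" unfolding R_def S_def B_def by (rule Sk_lower(1)[OF b2 r1 K(1)])
  have SB: "R * ((B - 1) / B^2) \<le> 2 * S" unfolding R_def S_def B_def by (rule Sk_lower(2)[OF b2 r1 K(1)])
  have "(B - 1) * VV b r K + 2 * g = (B + 1) * S" unfolding B_def g_def S_def by (rule VV_Phi[OF b2])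
  then have h: "(B - 1) * VV b r K = (B + 1) * S - 2 * g" by linarith
  have VVe: "(B - 1)^2 * VV b r K = (B^2 - 1) * S - 2 * (B - 1) * g"
  proof -
    have "(B - 1)^2 * VV b r K = (B - 1) * ((B - 1) * VV b r K)" by (simp add: power2_eq_square)
    also have "\<dots> = (B - 1) * ((B + 1) * S - 2 * g)" by (simp only: h)
    also have "\<dots> = (B^2 - 1) * S - 2 * (B - 1) * g" by (simp add: power2_eq_square algebra_simps)
    finally show ?thesis .
  qed
  have "B / 4 * R \<le> (B^2 - 1) * S - 2 * (B - 1) * g"
  proof (cases "b = 2")
    case True
    then have B2: "B = 2" unfolding B_def by simp
    have "R * (3 / 16) \<le> S" using SA unfolding B2 by simp
    moreover have "g \<le> 1 / 256" using gK unfolding B2 by simp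
    ultimately show ?thesis unfolding B2 using R1 by simp
  next
    case False
    then have B3: "3 \<le> B" using b2 unfolding B_def by simp
    have "3 * 3 \<le> B * B" using B3 by (intro mult_mono) auto
    then have Bsq: "9 \<le> B^2" by (simp add: power2_eq_square)
    define P where "P = (B^2 - 1) * (B - 1) / (2 * B^2)"
    have num: "0 \<le> B^3 - 2 * B^2 - 2 * B + 1"
    proof -
      have "B^2 * 1 \<le> B^2 * (B - 2)" using B3 by (intro mult_left_mono) auto
      then have "B^2 \<le> B^3 - 2 * B^2" by (simp add: power2_eq_square power3_eq_cube algebra_simps)
      moreover have "0 \<le> (B - 1)^2" by simp
      ultimately show ?thesis by (simp add: power2_eq_square algebra_simps)
    qed
    have PB: "B / 4 + 1 / (4 * B^2) \<le> P"
    proof -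
      have "P - (B / 4 + 1 / (4 * B^2)) = (B^3 - 2 * B^2 - 2 * B + 1) / (4 * B^2)"
        unfolding P_def using B0 by (simp add: field_simps power2_eq_square power3_eq_cube)
      also have "\<dots> \<ge> 0" using num B0 by simp
      finally show ?thesis by simp
    qed
    have "(B^2 - 1) * (R * ((B - 1) / B^2)) \<le> (B^2 - 1) * (2 * S)"
      using SB Bsq by (intro mult_left_mono) auto
    then have RP: "R * P \<le> (B^2 - 1) * S" unfolding P_def by (simp add: field_simps)
    have "R * (B / 4 + 1 / (4 * B^2)) \<le> R * P" using PB R1 by (intro mult_left_mono) auto
    moreover have "1 / (4 * B^2) \<le> R * (1 / (4 * B^2))"
    proof -
      have "1 * (1 / (4 * B^2)) \<le> R * (1 / (4 * B^2))" using R1 B0 by (intro mult_right_mono) auto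
      then show ?thesis by simp
    qed
    moreover have "2 * (B - 1) * g \<le> 1 / (4 * B^2)"
    proof -
      have "2 * (B - 1) * g \<le> 2 * B * (1 / (32 * B^3))" using g0 gK B by (intro mult_mono) auto
      also have "\<dots> = 1 / (16 * B^2)" using B0 by (simp add: field_simps power2_eq_square power3_eq_cube)
      also have "\<dots> \<le> 1 / (4 * B^2)" using B0 by (simp add: field_simps)
      finally show ?thesis .
    qed
    ultimately show ?thesis using RP by (simp add: algebra_simps)
  qed
  then have "B / 4 * R \<le> (B - 1)^2 * VV b r K" using VVe by linarith
  then show ?thesis unfolding B_def R_def by (intro exI[of _ K])
qed

end

context
  fixes b r :: nat
  assumes b2: "2 \<le> b" and r1: "1 \<le> r"
begin

lemma Delta_real:
  assumes n: "L b r \<le> n" and m: "m < b ^ n"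
  shows "real_of_int (Delta b r m) = real (sdig b r) - (real b - 1) * real (CC b r n m)"
proof -
  have "Delta b r m = int (sdig b r) - int (b - 1) * int (CC b r n m)"
    by (rule Delta_CC[OF b2 r_lt[OF b2 r1 n] m])
  then show ?thesis using b2 by (simp add: of_nat_diff)
qed

lemma E1_eq:
  assumes n: "L b r \<le> n"
  shows "(\<Sum>m<b ^ n. real_of_int (Delta b r m)) / real b ^ n = real (sdig b r) - (real b - 1) * m1 b r n"
proof -
  have bn: "0 < real b ^ n" using b2 by simp
  have "(\<Sum>m<b ^ n. real_of_int (Delta b r m)) = (\<Sum>m<b ^ n. real (sdig b r) - (real b - 1) * real (CC b r n m))"
    using Delta_real[OF n] by simp
  also have "\<dots> = real b ^ n * real (sdig b r) - (real b - 1) * real (S1 b r n)"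
    by (simp add: sum_subtractf sum_distrib_left[symmetric] S1_def)
  finally show ?thesis unfolding m1_def using bn by (simp add: field_simps)
qed

lemma E2_eq:
  assumes n: "L b r \<le> n"
  shows "(\<Sum>m<b ^ n. (real_of_int (Delta b r m) - M)^2) / real b ^ n
       = (real b - 1)^2 * VV b r n + (real (sdig b r) - (real b - 1) * m1 b r n - M)^2"
proof -
  define c where "c = real (sdig b r) - M"
  define a where "a = real b - 1"
  define P where "P = real b ^ n"
  have bn: "0 < P" unfolding P_def using b2 by simp
  have "(\<Sum>m<b ^ n. (real_of_int (Delta b r m) - M)^2) = (\<Sum>m<b ^ n. (c - a * real (CC b r n m))^2)"
    unfolding c_def a_def by (intro sum.cong refl) (simp add: Delta_real[OF n] algebra_simps)
  also have "\<dots> = (\<Sum>m<b ^ n. c^2 - 2 * c * a * real (CC b r n m) + a^2 * real (CC b r n m)^2)"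
    by (intro sum.cong refl) (simp add: power2_eq_square algebra_simps)
  also have "\<dots> = P * c^2 - 2 * c * a * real (S1 b r n) + a^2 * real (S2 b r n)"
    unfolding P_def S1_def S2_def by (simp add: sum.distrib sum_subtractf sum_distrib_left[symmetric])
  finally have e: "(\<Sum>m<b ^ n. (real_of_int (Delta b r m) - M)^2) = P * c^2 - 2 * c * a * real (S1 b r n) + a^2 * real (S2 b r n)" .
  show ?thesis unfolding e VV_def m1_def m2_def P_def[symmetric] c_def[symmetric] a_def[symmetric]
  proof -
    have eqsq: "(c - a * (real (S1 b r n) / P))^2 = (real (sdig b r) - a * (real (S1 b r n) / P) - M)^2"
      unfolding c_def by (simp add: algebra_simps)
    have F: "(P * c^2 - 2 * c * a * real (S1 b r n) + a^2 * real (S2 b r n)) / P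
        = a^2 * (real (S2 b r n) / P - (real (S1 b r n) / P)^2) + (c - a * (real (S1 b r n) / P))^2"
      using bn by (simp add: field_simps power2_eq_square)
    show "(P * c^2 - 2 * c * a * real (S1 b r n) + a^2 * real (S2 b r n)) / P
        = a^2 * (real (S2 b r n) / P - (real (S1 b r n) / P)^2) + (real (sdig b r) - a * (real (S1 b r n) / P) - M)^2"
      unfolding eqsq[symmetric] by (rule F)
  qed
qed

lemma phi_abs: "\<bar>real_of_int (phi b r k)\<bar> \<le> (real (sdig b r) + real b) * (real k + 1)"
proof -
  have "real_of_int (phi b r k) = real (sdig b r) - (real b - 1) * real k"
    unfolding phi_def using b2 by (simp add: of_nat_diff)
  moreover have "0 \<le> (real b - 1) * real k" using b2 by simp
  moreover have "(real b - 1) * real k \<le> real b * (real k + 1)" using b2 by (simp add: algebra_simps)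
  moreover have "real (sdig b r) \<le> real (sdig b r) * (real k + 1)" by (simp add: algebra_simps)
  moreover have "0 \<le> real b * (real k + 1)" by simp
  moreover have "0 \<le> real (sdig b r)" by simp
  moreover have "(real (sdig b r) + real b) * (real k + 1) = real (sdig b r) * (real k + 1) + real b * (real k + 1)"
    by (simp add: algebra_simps)
  ultimately show ?thesis unfolding abs_le_iff by linarith
qed

theorem main:
  "real b / 4 * real (rho b r) \<le> var_mu b r \<and> var_mu b r \<le> 2 * real b ^ 2 * real (rho b r)"
proof -
  define s where "s = real (sdig b r)"
  define Mu where "Mu = mean_mu b r"
  define H where "H = s + real b"
  have H0: "0 \<le> H" unfolding H_def s_def by simp
  have k1: "real k + 1 \<le> (real k + 1)^2" for k by (simp add: power2_eq_square)
  have hb1: "\<bar>real_of_int (phi b r k)\<bar> \<le> H * (real k + 1)^2" for k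
  proof -
    have "\<bar>real_of_int (phi b r k)\<bar> \<le> H * (real k + 1)" using phi_abs unfolding H_def s_def .
    also have "\<dots> \<le> H * (real k + 1)^2" using H0 k1 by (intro mult_left_mono) auto
    finally show ?thesis .
  qed
  have lim1: "(\<lambda>n. (\<Sum>m<b ^ n. real_of_int (Delta b r m)) / real b ^ n) \<longlonglongrightarrow> Mu"
    using moment_lim[OF b2 r1, of real_of_int H] hb1 unfolding Mu_def mean_mu_def by simp
  define H2 where "H2 = (H + \<bar>Mu\<bar>)^2"
  have hb2: "\<bar>(real_of_int (phi b r k) - Mu)^2\<bar> \<le> H2 * (real k + 1)^2" for k
  proof -
    have "\<bar>real_of_int (phi b r k) - Mu\<bar> \<le> H * (real k + 1) + \<bar>Mu\<bar> * (real k + 1)"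
    proof -
      have "\<bar>real_of_int (phi b r k)\<bar> \<le> H * (real k + 1)" using phi_abs[of k] unfolding H_def s_def .
      moreover have "\<bar>Mu\<bar> \<le> \<bar>Mu\<bar> * (real k + 1)" by (simp add: algebra_simps)
      moreover have "\<bar>real_of_int (phi b r k) - Mu\<bar> \<le> \<bar>real_of_int (phi b r k)\<bar> + \<bar>Mu\<bar>" by (rule abs_triangle_ineq4)
      ultimately show ?thesis by linarith
    qed
    then have "\<bar>real_of_int (phi b r k) - Mu\<bar> \<le> (H + \<bar>Mu\<bar>) * (real k + 1)" by (simp add: algebra_simps)
    then have "\<bar>real_of_int (phi b r k) - Mu\<bar>^2 \<le> ((H + \<bar>Mu\<bar>) * (real k + 1))^2"
      by (intro power_mono) auto
    then show ?thesis unfolding H2_def by (simp add: power_mult_distrib)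
  qed
  have lim2: "(\<lambda>n. (\<Sum>m<b ^ n. (real_of_int (Delta b r m) - Mu)^2) / real b ^ n) \<longlonglongrightarrow> var_mu b r"
    using moment_lim[OF b2 r1, of "\<lambda>d. (real_of_int d - Mu)^2" H2] hb2 unfolding Mu_def var_mu_def by simp
  define W where "W n = (real b - 1)^2 * VV b r n" for n
  have limW: "W \<longlonglongrightarrow> var_mu b r"
  proof -
    have "(\<lambda>n. (\<Sum>m<b ^ n. (real_of_int (Delta b r m) - Mu)^2) / real b ^ n
              - ((\<Sum>m<b ^ n. real_of_int (Delta b r m)) / real b ^ n - Mu)^2) \<longlonglongrightarrow> var_mu b r - (Mu - Mu)^2"
      by (intro tendsto_intros lim1 lim2)
    then have l: "(\<lambda>n. (\<Sum>m<b ^ n. (real_of_int (Delta b r m) - Mu)^2) / real b ^ n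
              - ((\<Sum>m<b ^ n. real_of_int (Delta b r m)) / real b ^ n - Mu)^2) \<longlonglongrightarrow> var_mu b r" by simp
    show ?thesis
    proof (rule Lim_transform_eventually[OF l])
      show "\<forall>\<^sub>F n in sequentially. (\<Sum>m<b ^ n. (real_of_int (Delta b r m) - Mu)^2) / real b ^ n
              - ((\<Sum>m<b ^ n. real_of_int (Delta b r m)) / real b ^ n - Mu)^2 = W n"
        by (rule eventually_mono[OF eventually_ge_at_top[of "L b r"]]) (simp add: E1_eq E2_eq W_def)
    qed
  qed
  have inc: "incseq W"
  proof (rule incseq_SucI)
    fix n show "W n \<le> W (Suc n)" unfolding W_def using VV_mono[OF b2, of r n] by (intro mult_left_mono) auto
  qed
  obtain K where K: "real b / 4 * real (rho b r) \<le> W K" using VV_lower[OF b2 r1] unfolding W_def by blast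
  have "W K \<le> var_mu b r" by (rule incseq_le[OF inc limW])
  moreover have "var_mu b r \<le> 2 * real b ^ 2 * real (rho b r)"
    by (rule LIMSEQ_le_const2[OF limW]) (use VV_upper[OF b2 r1] in \<open>auto simp: W_def\<close>)
  ultimately show ?thesis using K by linarith
qed

end

theorem theorem1:
  fixes b r :: nat
  assumes "b \<ge> 2" and "r \<ge> 1"
  shows "real b / 4 * real (rho b r) \<le> var_mu b r
         \<and> var_mu b r \<le> 2 * real b ^ 2 * real (rho b r)"
  using main[OF assms] .

end
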